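(* Let $\mathbb X\subset\mathbb P^2$ be any linear configuration of type $(n_1,\dots,n_r)$ and let $\mathbb Z$ be its first infinitesimal neighborhood. Then the regularity of $\mathbb Z$ is $2n_r$. In particular, all first infinitesimal neighborhoods of linear configurations of the same type have the same regularity.
   Context: $k$ is an infinite field of characteristic zero, $R=k[x_0,x_1,x_2]$. A linear configuration of type $(n_1,\dots,n_r)$, $0<n_1<\cdots<n_r$, is $\bigcup_{i=1}^r\mathbb X_i$ with $L_1,\dots,L_r$ distinct lines, $\mathbb X_i$ a set of $n_i$ points on $L_i$, and no point of $\mathbb X_i$ on $L_j$ for $j\ne i$. The first infinitesimal neighborhood of $\{P_1,\dots,P_s\}$ (prime ideals $\wp_i$) is defined by $\wp_1^2\cap\cdots\cap\wp_s^2$. The regularity of a zero-dimensional scheme with saturated ideal $I$ is $\min\{t:h^1(\mathcal I(t-1))=0\}$, equivalently the least $t$ with $\Delta h(t)=0$ where $h(t)=\dim_k(R/I)_t$. *)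

theory Defs
  imports Complex_Main "HOL-Library.Function_Algebras"
begin

text \<open>Forms in k[x0,x1,x2] are coefficient functions on exponent triples (a,b,c),
  standing for x0^a x1^b x2^c. Points of P^2 are given by nonzero coordinate triples,
  lines by nonzero coefficient triples (u,v,w) of the linear form u x0 + v x1 + w x2.\<close>

type_synonym expo = "nat \<times> nat \<times> nat"

fun edeg :: "expo \<Rightarrow> nat" where
  "edeg (a, b, c) = a + b + c"

definition scalef :: "'a::field \<Rightarrow> (expo \<Rightarrow> 'a) \<Rightarrow> (expo \<Rightarrow> 'a)" where
  "scalef c f = (\<lambda>m. c * f m)"

definition hom_forms :: "nat \<Rightarrow> (expo \<Rightarrow> 'a::zero) set" where
  "hom_forms t = {f. \<forall>m. f m \<noteq> 0 \<longrightarrow> edeg m = t}"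

fun pmul :: "(expo \<Rightarrow> 'a::field) \<Rightarrow> (expo \<Rightarrow> 'a) \<Rightarrow> expo \<Rightarrow> 'a" where
  "pmul f g (a, b, c) =
     (\<Sum>i\<le>a. \<Sum>j\<le>b. \<Sum>l\<le>c. f (i, j, l) * g (a - i, b - j, c - l))"

definition linform :: "'a::zero \<times> 'a \<times> 'a \<Rightarrow> expo \<Rightarrow> 'a" where
  "linform l m = (case l of (u, v, w) \<Rightarrow>
     if m = (1,0,0) then u else if m = (0,1,0) then v else if m = (0,0,1) then w else 0)"

fun lin_eval :: "'a::field \<times> 'a \<times> 'a \<Rightarrow> 'a \<times> 'a \<times> 'a \<Rightarrow> 'a" where
  "lin_eval (u, v, w) (p0, p1, p2) = u * p0 + v * p1 + w * p2"

definition on_line :: "'a::field \<times> 'a \<times> 'a \<Rightarrow> 'a \<times> 'a \<times> 'a \<Rightarrow> bool" where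
  "on_line P L \<longleftrightarrow> lin_eval L P = 0"

definition proportional :: "'a::field \<times> 'a \<times> 'a \<Rightarrow> 'a \<times> 'a \<times> 'a \<Rightarrow> bool" where
  "proportional p q \<longleftrightarrow> (\<exists>c. c \<noteq> 0 \<and>
      q = (c * fst p, c * fst (snd p), c * snd (snd p)))"

definition nonzero3 :: "'a::zero \<times> 'a \<times> 'a \<Rightarrow> bool" where
  "nonzero3 p \<longleftrightarrow> p \<noteq> (0, 0, 0)"

text \<open>Degree-t part of \<wp>_P^2, where \<wp>_P is the homogeneous prime ideal of P,
  generated by the linear forms vanishing at P; so (\<wp>_P^2)_t is spanned by the
  products l1 * l2 * g with l1, l2 linear forms vanishing at P and g a form of degree t-2.\<close>
definition sq_point_ideal_deg :: "'a::field \<times> 'a \<times> 'a \<Rightarrow> nat \<Rightarrow> (expo \<Rightarrow> 'a) set" where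
  "sq_point_ideal_deg P t = module.span scalef
     {pmul (pmul (linform l1) (linform l2)) g | l1 l2 g.
        2 \<le> t \<and> lin_eval l1 P = 0 \<and> lin_eval l2 P = 0 \<and> g \<in> hom_forms (t - 2)}"

text \<open>Degree-t part of the ideal \<wp>_1^2 \<inter> ... \<inter> \<wp>_s^2 of the first infinitesimal
  neighbourhood of the finite point set X.\<close>
definition fin_ideal_deg :: "('a::field \<times> 'a \<times> 'a) set \<Rightarrow> nat \<Rightarrow> (expo \<Rightarrow> 'a) set" where
  "fin_ideal_deg X t = hom_forms t \<inter> (\<Inter>P\<in>X. sq_point_ideal_deg P t)"

definition hilb_fin :: "('a::field \<times> 'a \<times> 'a) set \<Rightarrow> nat \<Rightarrow> int" where
  "hilb_fin X t = int (vector_space.dim (scalef :: 'a \<Rightarrow> _) (hom_forms t))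
                 - int (vector_space.dim (scalef :: 'a \<Rightarrow> _) (fin_ideal_deg X t))"

text \<open>First difference \<Delta>h(t) = h(t) - h(t-1), with h(-1) = 0.\<close>
definition dhilb_fin :: "('a::field \<times> 'a \<times> 'a) set \<Rightarrow> nat \<Rightarrow> int" where
  "dhilb_fin X t = (if t = 0 then hilb_fin X 0 else hilb_fin X t - hilb_fin X (t - 1))"

definition reg_fin :: "('a::field \<times> 'a \<times> 'a) set \<Rightarrow> nat" where
  "reg_fin X = (LEAST t. dhilb_fin X t = 0)"

text \<open>Linear configuration of type (n_0,...,n_{r-1}) (0-indexed): lines L i, point sets X i.\<close>
definition linear_configuration ::
  "nat \<Rightarrow> (nat \<Rightarrow> nat) \<Rightarrow> (nat \<Rightarrow> 'a::field \<times> 'a \<times> 'a) \<Rightarrow> (nat \<Rightarrow> ('a \<times> 'a \<times> 'a) set) \<Rightarrow> bool" where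
  "linear_configuration r n L X \<longleftrightarrow>
     1 \<le> r \<and> 0 < n 0 \<and> (\<forall>i. Suc i < r \<longrightarrow> n i < n (Suc i)) \<and>
     (\<forall>i<r. nonzero3 (L i)) \<and>
     (\<forall>i<r. \<forall>j<r. i \<noteq> j \<longrightarrow> \<not> proportional (L i) (L j)) \<and>
     (\<forall>i<r. finite (X i) \<and> card (X i) = n i) \<and>
     (\<forall>i<r. \<forall>P\<in>X i. nonzero3 P \<and> on_line P (L i)) \<and>
     (\<forall>i<r. \<forall>P\<in>X i. \<forall>Q\<in>X i. P \<noteq> Q \<longrightarrow> \<not> proportional P Q) \<and>
     (\<forall>i<r. \<forall>j<r. i \<noteq> j \<longrightarrow> (\<forall>P\<in>X i. \<not> on_line P (L j)))"

end

theory Submission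
  imports Defs "HOL-Computational_Algebra.Polynomial"
begin

type_synonym 'a mp = "'a poly poly poly"

definition fs :: "(expo \<Rightarrow> 'a::zero) \<Rightarrow> bool" where
  "fs f \<longleftrightarrow> finite {m. f m \<noteq> 0}"

definition CC :: "'a::zero mp \<Rightarrow> expo \<Rightarrow> 'a" where
  "CC p m = (case m of (a,b,c) \<Rightarrow> coeff (coeff (coeff p c) b) a)"

definition MON :: "expo \<Rightarrow> 'a::zero \<Rightarrow> 'a mp" where
  "MON m v = (case m of (a,b,c) \<Rightarrow> monom (monom (monom v a) b) c)"

definition NN :: "(expo \<Rightarrow> 'a::comm_monoid_add) \<Rightarrow> 'a mp" where
  "NN f = (\<Sum>m\<in>{m. f m \<noteq> 0}. MON m (f m))"

lemma CC_mult: "CC (p * q) = pmul (CC p) (CC q)"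
proof (rule ext, clarify)
  fix a b c
  have "CC (p*q) (a,b,c) = (\<Sum>l\<le>c. \<Sum>j\<le>b. \<Sum>i\<le>a.
      coeff (coeff (coeff p l) j) i * coeff (coeff (coeff q (c-l)) (b-j)) (a-i))"
    by (simp add: CC_def coeff_mult coeff_sum)
  also have "\<dots> = (\<Sum>i\<le>a. \<Sum>j\<le>b. \<Sum>l\<le>c.
      coeff (coeff (coeff p l) j) i * coeff (coeff (coeff q (c-l)) (b-j)) (a-i))"
    (is "?A = ?B")
  proof -
    have "?A = (\<Sum>l\<le>c. \<Sum>i\<le>a. \<Sum>j\<le>b.
      coeff (coeff (coeff p l) j) i * coeff (coeff (coeff q (c-l)) (b-j)) (a-i))"
      by (rule sum.cong[OF refl], rule sum.swap)
    also have "\<dots> = (\<Sum>i\<le>a. \<Sum>l\<le>c. \<Sum>j\<le>b.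
      coeff (coeff (coeff p l) j) i * coeff (coeff (coeff q (c-l)) (b-j)) (a-i))"
      by (rule sum.swap)
    also have "\<dots> = ?B"
      by (rule sum.cong[OF refl], rule sum.swap)
    finally show ?thesis .
  qed
  finally show "CC (p*q) (a,b,c) = pmul (CC p) (CC q) (a,b,c)"
    by (simp add: CC_def)
qed

lemma CC_MON: "CC (MON m v) m' = (if m = m' then v else 0)"
  by (cases m; cases m'; simp add: CC_def MON_def coeff_monom)

lemma CC_sum: "CC (\<Sum>x\<in>A. p x) m = (\<Sum>x\<in>A. CC (p x) m)"
  by (cases m; simp add: CC_def coeff_sum)

lemma CC_add: "CC (p + q) = CC p + CC q"
  by (rule ext, simp add: CC_def split: prod.splits)

lemma CC_NN: "fs f \<Longrightarrow> CC (NN f) = f"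
proof (rule ext)
  fix m assume "fs f"
  have "CC (NN f) m = (\<Sum>x\<in>{m. f m \<noteq> 0}. if x = m then f x else 0)"
    by (simp add: NN_def CC_sum CC_MON)
  also have "\<dots> = f m" using \<open>fs f\<close> unfolding fs_def
    by (simp add: sum.delta')
  finally show "CC (NN f) m = f m" .
qed

lemma CC_inj: "CC p = CC q \<Longrightarrow> p = q"
proof -
  assume h: "CC p = CC q"
  show "p = q"
  proof (rule poly_eqI)+
    fix c b a
    have "CC p (a,b,c) = CC q (a,b,c)" using h by simp
    thus "coeff (coeff (coeff p c) b) a = coeff (coeff (coeff q c) b) a" by (simp add: CC_def)
  qed
qed

lemma NN_inj: "fs f \<Longrightarrow> fs g \<Longrightarrow> NN f = NN g \<Longrightarrow> f = g"
  by (metis CC_NN)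

lemma fs_add: "fs f \<Longrightarrow> fs g \<Longrightarrow> fs (f + (g::expo\<Rightarrow>'a::comm_monoid_add))"
  unfolding fs_def by (rule finite_subset[of _ "{m. f m \<noteq> 0} \<union> {m. g m \<noteq> 0}"]) auto

lemma fs_scalef: "fs f \<Longrightarrow> fs (scalef c f)"
  unfolding fs_def scalef_def by (rule finite_subset[of _ "{m. f m \<noteq> 0}"]) auto

lemma fs_zero[simp]: "fs (0::expo\<Rightarrow>'a::zero)"
  unfolding fs_def by simp

lemma fs_uminus: "fs f \<Longrightarrow> fs (- (f::expo \<Rightarrow> 'a::ab_group_add))"
  unfolding fs_def by simp

lemma fs_diff: "fs f \<Longrightarrow> fs g \<Longrightarrow> fs (f - (g::expo \<Rightarrow> 'a::ab_group_add))"
  unfolding fs_def by (rule finite_subset[of _ "{m. f m \<noteq> 0} \<union> {m. g m \<noteq> 0}"]) auto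

fun eadd :: "expo \<Rightarrow> expo \<Rightarrow> expo" where
  "eadd (a,b,c) (a',b',c') = (a+a', b+b', c+c')"

lemma fs_pmul: "fs f \<Longrightarrow> fs g \<Longrightarrow> fs (pmul f g)"
proof -
  assume f: "fs f" and g: "fs g"
  have "{m. pmul f g m \<noteq> 0} \<subseteq> (\<lambda>(x,y). eadd x y) ` ({m. f m \<noteq> 0} \<times> {m. g m \<noteq> 0})"
  proof
    fix m assume "m \<in> {m. pmul f g m \<noteq> 0}"
    then obtain a b c where m: "m = (a,b,c)" and ne: "pmul f g (a,b,c) \<noteq> 0"
      by (cases m) auto
    from ne obtain i j l where "i \<le> a" "j \<le> b" "l \<le> c"
      "f (i,j,l) * g (a-i,b-j,c-l) \<noteq> 0"
      by (auto elim!: sum.not_neutral_contains_not_neutral)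
    thus "m \<in> (\<lambda>(x,y). eadd x y) ` ({m. f m \<noteq> 0} \<times> {m. g m \<noteq> 0})"
      unfolding m by (intro image_eqI[of _ _ "((i,j,l),(a-i,b-j,c-l))"]) auto
  qed
  thus ?thesis using f g unfolding fs_def by (meson finite_SigmaI finite_imageI finite_subset)
qed


lemma NN_pmul: "fs f \<Longrightarrow> fs g \<Longrightarrow> NN (pmul f g) = NN f * NN g"
  by (rule CC_inj) (simp add: CC_NN CC_mult fs_pmul)

lemma NN_add: "fs f \<Longrightarrow> fs g \<Longrightarrow> NN (f + g) = NN f + NN g"
  by (rule CC_inj) (simp add: CC_NN CC_add fs_add)

lemma CC_const_mult: "CC (smult [:[:c:]:] p) = scalef c (CC p)"
  by (rule ext) (simp add: CC_def scalef_def split: prod.splits)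

lemma NN_scalef: "fs f \<Longrightarrow> NN (scalef c f) = smult [:[:c:]:] (NN f)"
  by (rule CC_inj) (simp add: CC_NN CC_const_mult fs_scalef)

lemma NN_zero[simp]: "NN 0 = 0"
  by (simp add: NN_def)

lemma CC_uminus: "CC (- p) = - CC (p::'a::comm_ring mp)"
  by (rule ext, simp add: CC_def split: prod.splits)

lemma CC_diff: "CC (p - q) = CC p - CC (q::'a::comm_ring mp)"
  by (rule ext, simp add: CC_def split: prod.splits)

lemma NN_uminus: "fs f \<Longrightarrow> NN (- f) = - NN (f :: expo \<Rightarrow> 'a::{field})"
  by (rule CC_inj) (simp add: CC_NN fs_uminus CC_uminus)

lemma NN_diff: "fs f \<Longrightarrow> fs g \<Longrightarrow> NN (f - g) = NN f - NN (g :: expo \<Rightarrow> 'a::{field})"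
  by (rule CC_inj) (simp add: CC_NN fs_diff CC_diff)

definition mono :: "expo \<Rightarrow> 'a::comm_semiring_1 \<times> 'a \<times> 'a \<Rightarrow> 'a" where
  "mono m P = (case m of (a,b,c) \<Rightarrow> case P of (p0,p1,p2) \<Rightarrow> p0^a * p1^b * p2^c)"

definition ev :: "(expo \<Rightarrow> 'a::comm_semiring_1) \<Rightarrow> 'a \<times> 'a \<times> 'a \<Rightarrow> 'a" where
  "ev f P = (\<Sum>m\<in>{m. f m \<noteq> 0}. f m * mono m P)"

definition EE :: "'a::comm_semiring_1 \<times> 'a \<times> 'a \<Rightarrow> 'a mp \<Rightarrow> 'a" where
  "EE P p = (case P of (p0,p1,p2) \<Rightarrow> poly (poly (poly p [:[:p2:]:]) [:p1:]) p0)"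

lemma EE_mult: "EE P (p * q) = EE P p * EE P q"
  by (simp add: EE_def split: prod.splits)

lemma EE_add: "EE P (p + q) = EE P p + EE P q"
  by (simp add: EE_def split: prod.splits)

lemma EE_sum: "EE P (\<Sum>x\<in>A. p x) = (\<Sum>x\<in>A. EE P (p x))"
  by (simp add: EE_def poly_sum split: prod.splits)

lemma pconst_pow: "[:x:]^n = [:x^n:]"
  by (induction n) (auto simp: mult.commute)

lemma EE_MON: "EE P (MON m v) = v * mono m P"
  by (simp add: EE_def MON_def mono_def poly_monom pconst_pow mult_ac split: prod.splits)

lemma ev_EE: "fs f \<Longrightarrow> ev f P = EE P (NN f)"
  by (simp add: ev_def NN_def EE_sum EE_MON)

lemma ev_pmul: "fs f \<Longrightarrow> fs g \<Longrightarrow> ev (pmul f g) P = ev f P * ev g P"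
  by (simp add: ev_EE fs_pmul NN_pmul EE_mult)

lemma ev_add: "fs f \<Longrightarrow> fs g \<Longrightarrow> ev (f + g) P = ev f P + ev g P"
  by (simp add: ev_EE fs_add NN_add EE_add)

lemma ev_scalef: "fs f \<Longrightarrow> ev (scalef c f) P = c * ev f P"
  by (simp add: ev_EE fs_scalef NN_scalef EE_mult) (simp add: EE_def split: prod.splits)

lemma ev_zero[simp]: "ev 0 P = 0"
  by (simp add: ev_def)


lemma vs_scalef: "vector_space (scalef :: 'a::field \<Rightarrow> (expo \<Rightarrow> 'a) \<Rightarrow> _)"
  by unfold_locales (auto simp: scalef_def fun_eq_iff algebra_simps)

global_interpretation vs: vector_space "scalef :: 'a::field \<Rightarrow> (expo \<Rightarrow> 'a) \<Rightarrow> _"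
  by (rule vs_scalef)

lemma scalef_apply[simp]: "scalef c f m = c * f m"
  by (simp add: scalef_def)

definition mons :: "nat \<Rightarrow> expo set" where
  "mons t = {m. edeg m = t}"

lemma finite_mons: "finite (mons t)"
proof -
  have "mons t \<subseteq> {..t} \<times> {..t} \<times> {..t}"
    by (auto simp: mons_def)
  thus ?thesis by (rule finite_subset) auto
qed

lemma hom_formsD: "f \<in> hom_forms t \<Longrightarrow> f m \<noteq> 0 \<Longrightarrow> edeg m = t"
  unfolding hom_forms_def by blast

lemma hom_fs: "f \<in> hom_forms t \<Longrightarrow> fs f"
  unfolding fs_def
  by (rule finite_subset[OF _ finite_mons[of t]]) (auto simp: mons_def dest: hom_formsD)

lemma subspace_hom: "vs.subspace (hom_forms t)"
  unfolding vs.subspace_def hom_forms_def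
  by (auto simp del: edeg.simps) (metis add.left_neutral)

lemma pmul_hom: "f \<in> hom_forms a \<Longrightarrow> g \<in> hom_forms b \<Longrightarrow> pmul f g \<in> hom_forms (a+b)"
  unfolding hom_forms_def
proof (clarify)
  fix x y z
  assume f: "\<forall>m. f m \<noteq> 0 \<longrightarrow> edeg m = a" and g: "\<forall>m. g m \<noteq> 0 \<longrightarrow> edeg m = b"
    and ne: "pmul f g (x,y,z) \<noteq> 0"
  from ne obtain i j l where "i \<le> x" "j \<le> y" "l \<le> z"
      "f (i,j,l) * g (x-i,y-j,z-l) \<noteq> 0"
      by (auto elim!: sum.not_neutral_contains_not_neutral)
  with f g show "edeg (x,y,z) = a + b" by fastforce
qed

lemma pmul_add_right: "pmul f (g + h) = pmul f g + pmul f h"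
  by (rule ext, clarify) (simp add: distrib_left sum.distrib)

lemma pmul_add_left: "pmul (f + g) h = pmul f h + pmul g h"
  by (rule ext, clarify) (simp add: distrib_right sum.distrib)

lemma pmul_scalef_right: "pmul f (scalef c g) = scalef c (pmul f g)"
  by (rule ext, clarify) (simp add: sum_distrib_left mult_ac)

lemma pmul_scalef_left: "pmul (scalef c f) g = scalef c (pmul f g)"
  by (rule ext, clarify) (simp add: sum_distrib_left mult_ac)

lemma pmul_zero_right[simp]: "pmul f 0 = 0"
  by (rule ext, clarify) simp

lemma pmul_zero_left[simp]: "pmul 0 f = 0"
  by (rule ext, clarify) simp

lemma span_image_lin:
  assumes "\<And>x y. g (x + y) = g x + g y" "\<And>c x. g (scalef c x) = scalef c (g x)"
  shows "vs.span (g ` S) = g ` vs.span (S :: (expo \<Rightarrow> 'a::field) set)"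
proof -
  have "module_hom (scalef :: 'a \<Rightarrow> _) scalef g"
    unfolding module_hom_iff using assms vs_scalef module_iff_vector_space by blast
  thus ?thesis by (rule module_hom.span_image)
qed

lemma span_pmul: "vs.span (pmul f ` S) = pmul f ` vs.span S"
  by (rule span_image_lin) (simp_all add: pmul_add_right pmul_scalef_right)

lemma sum3_delta:
  "(\<Sum>i\<le>(a::nat). \<Sum>j\<le>(b::nat). \<Sum>l\<le>(c::nat). if i = i0 \<and> j = j0 \<and> l = l0 then F i j l else 0) =
   (if i0 \<le> a \<and> j0 \<le> b \<and> l0 \<le> c then F i0 j0 l0 else (0::'a::comm_monoid_add))"
proof -
  have 1: "(\<Sum>l\<le>c. if i = i0 \<and> j = j0 \<and> l = l0 then F i j l else 0) =
     (if i = i0 \<and> j = j0 \<and> l0 \<le> c then F i j l0 else 0)" for i j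
    by (cases "i = i0 \<and> j = j0") (auto simp: sum.delta)
  have 2: "(\<Sum>j\<le>b. if i = i0 \<and> j = j0 \<and> l0 \<le> c then F i j l0 else 0) =
     (if i = i0 \<and> j0 \<le> b \<and> l0 \<le> c then F i j0 l0 else 0)" for i
    by (cases "i = i0 \<and> l0 \<le> c") auto
  show ?thesis unfolding 1 2 by (cases "j0 \<le> b \<and> l0 \<le> c") auto
qed

lemma pmul_sum_right: "pmul f (\<Sum>x\<in>A. g x) = (\<Sum>x\<in>A. pmul f (g x))"
proof (induction A rule: infinite_finite_induct)
  case (insert x F)
  thus ?case by (simp only: sum.insert[OF insert(1,2)] pmul_add_right)
next
  case (infinite A) thus ?case by (metis sum.infinite pmul_zero_right)
qed (simp only: sum.empty pmul_zero_right)

lemma pmul_sum_left: "pmul (\<Sum>x\<in>A. g x) f = (\<Sum>x\<in>A. pmul (g x) f)"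
proof (induction A rule: infinite_finite_induct)
  case (insert x F)
  thus ?case by (simp only: sum.insert[OF insert(1,2)] pmul_add_left)
next
  case (infinite A) thus ?case by (metis sum.infinite pmul_zero_left)
qed (simp only: sum.empty pmul_zero_left)

lemma pmul_comm: "fs f \<Longrightarrow> fs g \<Longrightarrow> pmul f g = pmul g f"
  by (rule NN_inj) (auto simp: fs_pmul NN_pmul mult.commute)

lemma pmul_assoc: "fs f \<Longrightarrow> fs g \<Longrightarrow> fs h \<Longrightarrow> pmul (pmul f g) h = pmul f (pmul g h)"
  by (rule NN_inj) (auto simp: fs_pmul NN_pmul mult.assoc)

lemma pmul_left_commute: "fs f \<Longrightarrow> fs g \<Longrightarrow> fs h \<Longrightarrow> pmul f (pmul g h) = pmul g (pmul f h)"
  by (metis pmul_assoc pmul_comm)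

definition onef :: "expo \<Rightarrow> 'a::zero_neq_one" where
  "onef m = (if m = (0,0,0) then 1 else 0)"

lemma onef_hom: "onef \<in> hom_forms 0"
  by (auto simp: hom_forms_def onef_def)

lemma pmul_onef: "pmul onef f = (f :: expo \<Rightarrow> 'a::field)"
proof (rule ext, clarify)
  fix a b c
  have "pmul onef f (a,b,c) = (\<Sum>i\<le>a. \<Sum>j\<le>b. \<Sum>l\<le>c. (if i = 0 \<and> j = 0 \<and> l = 0 then f (a-i,b-j,c-l) else 0))"
    by (simp add: onef_def if_distrib[of "\<lambda>x. x * _"] cong: if_cong)
  also have "\<dots> = f (a,b,c)" by (simp only: sum3_delta) simp
  finally show "pmul onef f (a,b,c) = f (a,b,c)" .
qed

lemma pmul_linform: "pmul (linform (u,v,w)) g (a,b,c) =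
   u * (if 0 < a then g (a-1,b,c) else 0) + v * (if 0 < b then g (a,b-1,c) else 0)
   + w * (if 0 < c then g (a,b,c-1) else 0)"
proof -
  have L: "linform (u,v,w) (i,j,l) * g (a-i,b-j,c-l) =
     (if i = 1 \<and> j = 0 \<and> l = 0 then u * g (a-i,b-j,c-l) else 0) +
     (if i = 0 \<and> j = 1 \<and> l = 0 then v * g (a-i,b-j,c-l) else 0) +
     (if i = 0 \<and> j = 0 \<and> l = 1 then w * g (a-i,b-j,c-l) else 0)" for i j l
    by (auto simp: linform_def)
  show ?thesis
    unfolding pmul.simps L sum.distrib sum3_delta by auto
qed

lemma linform_hom: "linform l \<in> hom_forms 1"
  by (auto simp: hom_forms_def linform_def split: prod.splits if_splits)

lemma ev_linform: "ev (linform l) P = lin_eval l P"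
proof -
  obtain u v w where l: "l = (u,v,w)" by (cases l)
  obtain p0 p1 p2 where P: "P = (p0,p1,p2)" by (cases P)
  have "ev (linform l) P = (\<Sum>m\<in>{(1,0,0),(0,1,0),(0,0,1)}. linform l m * mono m P)"
    unfolding ev_def
    by (rule sum.mono_neutral_left) (auto simp: linform_def l)
  also have "\<dots> = lin_eval l P" by (simp add: linform_def l P mono_def)
  finally show ?thesis .
qed

lemma ev_superset: "finite S \<Longrightarrow> {m. f m \<noteq> 0} \<subseteq> S \<Longrightarrow> ev f P = (\<Sum>m\<in>S. f m * mono m P)"
  unfolding ev_def by (rule sum.mono_neutral_left) auto

fun psc :: "'a::times \<Rightarrow> 'a \<times> 'a \<times> 'a \<Rightarrow> 'a \<times> 'a \<times> 'a" where
  "psc c (p0,p1,p2) = (c*p0, c*p1, c*p2)"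

fun padd :: "'a::plus \<times> 'a \<times> 'a \<Rightarrow> 'a \<times> 'a \<times> 'a \<Rightarrow> 'a \<times> 'a \<times> 'a" where
  "padd (p0,p1,p2) (q0,q1,q2) = (p0+q0, p1+q1, p2+q2)"

lemma mono_psc: "mono m (psc c P) = c ^ edeg m * mono m P"
  by (cases m; cases P) (simp add: mono_def power_mult_distrib power_add mult_ac)

lemma ev_psc: "f \<in> hom_forms t \<Longrightarrow> ev f (psc c P) = c ^ t * ev f P"
  unfolding ev_def mono_psc by (auto simp: sum_distrib_left mult_ac hom_forms_def intro!: sum.cong)


definition lp :: "'a::comm_semiring_1 \<times> 'a \<times> 'a \<Rightarrow> 'a \<times> 'a \<times> 'a \<Rightarrow> 'a \<Rightarrow> 'a \<times> 'a \<times> 'a" where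
  "lp A B x = padd A (psc x B)"

definition monoP :: "expo \<Rightarrow> 'a::comm_semiring_1 \<times> 'a \<times> 'a \<Rightarrow> 'a \<times> 'a \<times> 'a \<Rightarrow> 'a poly" where
  "monoP m A B = (case m of (a,b,c) \<Rightarrow>
      [:fst A, fst B:]^a * [:fst (snd A), fst (snd B):]^b * [:snd (snd A), snd (snd B):]^c)"

definition rest :: "(expo \<Rightarrow> 'a::comm_semiring_1) \<Rightarrow> 'a \<times> 'a \<times> 'a \<Rightarrow> 'a \<times> 'a \<times> 'a \<Rightarrow> 'a poly" where
  "rest f A B = (\<Sum>m\<in>{m. f m \<noteq> 0}. smult (f m) (monoP m A B))"

lemma poly_monoP: "poly (monoP m A B) x = mono m (lp A B x)"
  by (cases m; cases A; cases B) (simp add: monoP_def mono_def lp_def mult_ac)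

lemma poly_rest: "poly (rest f A B) x = ev f (lp A B x)"
  by (simp add: rest_def ev_def poly_sum poly_monoP)

lemma rest_eqI: "(\<And>x. poly p x = poly q x) \<Longrightarrow> p = (q :: 'a::{field_char_0} poly)"
  using poly_eq_poly_eq_iff by blast

lemma rest_pmul: "fs f \<Longrightarrow> fs g \<Longrightarrow> rest (pmul f g) A B = rest f A B * (rest g A B :: 'a::field_char_0 poly)"
  by (rule rest_eqI) (simp add: poly_rest ev_pmul)

lemma rest_add: "fs f \<Longrightarrow> fs g \<Longrightarrow> rest (f + g) A B = rest f A B + (rest g A B :: 'a::field_char_0 poly)"
  by (rule rest_eqI) (simp add: poly_rest ev_add)

lemma rest_scalef: "fs f \<Longrightarrow> rest (scalef c f) A B = smult c (rest f A B :: 'a::field_char_0 poly)"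
  by (rule rest_eqI) (simp add: poly_rest ev_scalef)

lemma rest_zero[simp]: "rest 0 A B = 0"
  by (simp add: rest_def)

lemma fs_sum: "(\<And>x. x \<in> S \<Longrightarrow> fs (g x)) \<Longrightarrow> fs (\<Sum>x\<in>S. g x :: expo \<Rightarrow> 'a::comm_monoid_add)"
proof (induction S rule: infinite_finite_induct)
  case (insert x F)
  have e: "(\<Sum>y\<in>insert x F. g y) = g x + (\<Sum>y\<in>F. g y)" using insert(1,2) by (rule sum.insert)
  show ?case unfolding e by (rule fs_add) (use insert in auto)
qed simp_all

lemma rest_sum: "(\<And>x. x \<in> S \<Longrightarrow> fs (g x)) \<Longrightarrow>
   rest (\<Sum>x\<in>S. g x) A B = (\<Sum>x\<in>S. rest (g x) A B :: 'a::field_char_0 poly)"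
proof (induction S rule: infinite_finite_induct)
  case (insert x F)
  have "fs (\<Sum>x\<in>F. g x)" using insert by (intro fs_sum) auto
  have e: "(\<Sum>y\<in>insert x F. g y) = g x + (\<Sum>y\<in>F. g y)" using insert(1,2) by (rule sum.insert)
  show ?case unfolding e sum.insert[OF insert(1,2)] rest_add[OF insert(4)[of x] \<open>fs (\<Sum>x\<in>F. g x)\<close>, simplified]
    using insert by simp
qed simp_all

lemma rest_linform: "rest (linform l) A B = [:lin_eval l A, lin_eval l (B::'a::field_char_0 \<times> _):]"
proof (rule rest_eqI)
  fix x
  show "poly (rest (linform l) A B) x = poly [:lin_eval l A, lin_eval l B:] x"
    by (cases l; cases A; cases B) (simp add: poly_rest ev_linform lp_def algebra_simps)
qed

lemma degree_monoP: "degree (monoP m A B) \<le> edeg m"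
proof -
  obtain a b c where m: "m = (a,b,c)" by (cases m)
  have "degree (monoP m A B) \<le> degree ([:fst A, fst B:]^a * [:fst (snd A), fst (snd B):]^b) + degree ([:snd (snd A), snd (snd B):]^c)"
    unfolding monoP_def m by (simp add: degree_mult_le)
  also have "\<dots> \<le> (degree ([:fst A, fst B:]^a) + degree ([:fst (snd A), fst (snd B):]^b)) + degree ([:snd (snd A), snd (snd B):]^c)"
    by (simp add: degree_mult_le)
  also have "\<dots> \<le> a + b + c"
    by (intro add_mono; rule order.trans[OF degree_power_le]; simp)
  finally show ?thesis by (simp add: m)
qed

lemma degree_rest: "f \<in> hom_forms t \<Longrightarrow> degree (rest f A B) \<le> t"
  unfolding rest_def
  by (rule degree_sum_le) (auto simp: hom_fs[unfolded fs_def] intro: order.trans[OF degree_smult_le] order.trans[OF degree_monoP] dest: hom_formsD)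

definition pw :: "(expo \<Rightarrow> 'a::field) \<Rightarrow> nat \<Rightarrow> expo \<Rightarrow> 'a" where
  "pw g n = (pmul g ^^ n) onef"

lemma pw_0[simp]: "pw g 0 = onef" by (simp add: pw_def)
lemma pw_Suc: "pw g (Suc n) = pmul g (pw g n)" by (simp add: pw_def)

lemma pw_hom: "g \<in> hom_forms 1 \<Longrightarrow> pw g n \<in> hom_forms n"
proof (induction n)
  case (Suc n) thus ?case using pmul_hom[of g 1 "pw g n" n] by (simp add: pw_Suc)
qed (simp add: onef_hom)

lemma fs_onef: "fs onef"
  by (rule hom_fs[OF onef_hom])

lemma fs_linform: "fs (linform l)"
  by (rule hom_fs[OF linform_hom])

lemma rest_onef: "rest (onef :: expo \<Rightarrow> 'a::field_char_0) A B = 1"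
proof (rule rest_eqI)
  fix x
  have "ev (onef :: expo \<Rightarrow> 'a) (lp A B x) = (\<Sum>m\<in>{(0,0,0)}. onef m * mono m (lp A B x))"
    by (rule ev_superset) (auto simp: onef_def split: if_splits)
  thus "poly (rest onef A B) x = poly 1 x" by (simp add: poly_rest onef_def mono_def split: prod.splits)
qed

lemma rest_pw: "g \<in> hom_forms 1 \<Longrightarrow> rest (pw g n) A B = (rest g A B :: 'a::field_char_0 poly) ^ n"
proof (induction n)
  case (Suc n)
  have "fs g" "fs (pw g n)" using Suc hom_fs pw_hom by blast+
  thus ?case using Suc by (simp add: pw_Suc rest_pmul)
qed (simp add: rest_onef)

definition dv :: "'a::field_char_0 \<times> 'a \<times> 'a \<Rightarrow> (expo \<Rightarrow> 'a) \<Rightarrow> bool" where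
  "dv P f \<longleftrightarrow> (\<forall>v. coeff (rest f P v) 0 = 0 \<and> coeff (rest f P v) 1 = 0)"

lemma lp_0[simp]: "lp A B 0 = A"
  by (cases A; cases B) (simp add: lp_def)

lemma coeff0_rest: "coeff (rest f P v) 0 = ev f P"
  by (metis poly_0_coeff_0 poly_rest lp_0)

lemma coeff_mult_0: "coeff (p * q) 0 = coeff p 0 * coeff q 0"
  by (simp add: coeff_mult)

lemma coeff_mult_1: "coeff (p * q) (Suc 0) = coeff p 0 * coeff q (Suc 0) + coeff p (Suc 0) * coeff q 0"
  by (simp add: coeff_mult atMost_Suc ac_simps)

lemma dv_add: "fs f \<Longrightarrow> fs g \<Longrightarrow> dv P f \<Longrightarrow> dv P g \<Longrightarrow> dv P (f + g)"
  by (simp add: dv_def rest_add)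

lemma dv_scalef: "fs f \<Longrightarrow> dv P f \<Longrightarrow> dv P (scalef c f)"
  by (simp add: dv_def rest_scalef)

lemma dv_zero: "dv P 0"
  by (simp add: dv_def)

lemma dv_mul_left: "fs f \<Longrightarrow> fs g \<Longrightarrow> dv P g \<Longrightarrow> dv P (pmul f g)"
  by (simp add: dv_def rest_pmul coeff_mult_0 coeff_mult_1)

lemma dv_mul_right: "fs f \<Longrightarrow> fs g \<Longrightarrow> dv P f \<Longrightarrow> dv P (pmul f g)"
  by (simp add: dv_def rest_pmul coeff_mult_0 coeff_mult_1)

lemma dv_mul_vanish: "fs f \<Longrightarrow> fs g \<Longrightarrow> ev f P = 0 \<Longrightarrow> ev g P = 0 \<Longrightarrow> dv P (pmul f g)"
  by (simp add: dv_def rest_pmul coeff_mult_0 coeff_mult_1 coeff0_rest)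

lemma dv_cancel: "fs f \<Longrightarrow> fs g \<Longrightarrow> ev f P \<noteq> 0 \<Longrightarrow> dv P (pmul f g) \<Longrightarrow> dv P g"
  by (auto simp: dv_def rest_pmul coeff_mult_0 coeff_mult_1 coeff0_rest)

lemma dv_lin_zero: "fs g \<Longrightarrow> lin_eval l P = 0 \<Longrightarrow> lin_eval l v \<noteq> 0 \<Longrightarrow>
   dv P (pmul (linform l) g) \<Longrightarrow> ev g P = 0"
  unfolding dv_def
  by (drule spec[of _ v]) (auto simp: rest_pmul fs_linform coeff_mult_1 rest_linform coeff0_rest)

lemma dv_sum: "finite S \<Longrightarrow> (\<And>x. x \<in> S \<Longrightarrow> fs (g x) \<and> dv P (g x)) \<Longrightarrow> dv P (\<Sum>x\<in>S. g x)"
proof (induction S rule: finite_induct)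
  case (insert x F)
  have "fs (\<Sum>x\<in>F. g x)" using insert by (intro fs_sum) auto
  have e: "(\<Sum>y\<in>insert x F. g y) = g x + (\<Sum>y\<in>F. g y)" using insert(1,2) by (rule sum.insert)
  show ?case unfolding e
    by (rule dv_add) (use insert \<open>fs (\<Sum>x\<in>F. g x)\<close> in auto)
qed (simp add: dv_zero)


fun comp :: "nat \<Rightarrow> 'a \<times> 'a \<times> 'a \<Rightarrow> 'a" where
  "comp i (a,b,c) = (if i = 0 then a else if i = 1 then b else c)"

definition unitv :: "nat \<Rightarrow> 'a::{zero,one} \<times> 'a \<times> 'a" where
  "unitv k = (if k = 0 then (1,0,0) else if k = 1 then (0,1,0) else (0,0,1))"

definition frame :: "(nat \<Rightarrow> 'a::field \<times> 'a \<times> 'a) \<Rightarrow> (nat \<Rightarrow> 'a \<times> 'a \<times> 'a) \<Rightarrow> bool" where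
  "frame lam E \<longleftrightarrow> (\<forall>i<3. \<forall>j<3. lin_eval (lam i) (E j) = (if i = j then 1 else 0)) \<and>
     (\<forall>k<3. \<forall>l<3. (\<Sum>j<3. comp k (E j) * comp l (lam j)) = (if k = l then 1 else 0))"

lemma all3: "(\<forall>i<(3::nat). P i) \<longleftrightarrow> P 0 \<and> P (Suc 0) \<and> P (Suc (Suc 0))"
  by (auto simp: numeral_3_eq_3 less_Suc_eq)

lemma sum3: "(\<Sum>i<(3::nat). f i) = f 0 + f (Suc 0) + f (Suc (Suc 0))"
  by (simp add: numeral_3_eq_3)

lemma lin_eval_sym: "lin_eval a b = lin_eval b a"
  by (cases a; cases b) (simp add: mult.commute)

lemma frame_swap: "frame lam E \<Longrightarrow> frame E lam"
  unfolding frame_def all3 sum3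
  by (auto simp: lin_eval_sym mult.commute)

lemma frame_point:
  assumes "frame lam E"
  shows "P = padd (psc (lin_eval (lam 0) P) (E 0)) (padd (psc (lin_eval (lam 1) P) (E 1)) (psc (lin_eval (lam 2) P) (E 2)))"
proof -
  obtain p0 p1 p2 where P: "P = (p0,p1,p2)" by (cases P)
  have h: "(\<Sum>j<3. comp k (E j) * comp l (lam j)) = (if k = l then 1 else 0)" if "k < 3" "l < 3" for k l
    using assms that unfolding frame_def by blast
  have c: "comp k P = lin_eval (lam 0) P * comp k (E 0) + lin_eval (lam 1) P * comp k (E 1) + lin_eval (lam 2) P * comp k (E 2)"
    if "k < 3" for k
  proof -
    have "lin_eval (lam 0) P * comp k (E 0) + lin_eval (lam 1) P * comp k (E 1) + lin_eval (lam 2) P * comp k (E 2)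
      = p0 * (\<Sum>j<3. comp k (E j) * comp 0 (lam j)) + p1 * (\<Sum>j<3. comp k (E j) * comp 1 (lam j))
        + p2 * (\<Sum>j<3. comp k (E j) * comp 2 (lam j))"
      unfolding sum3 P
      by (cases "lam 0"; cases "lam 1"; cases "lam 2") (simp add: algebra_simps numeral_2_eq_2)
    also have "\<dots> = comp k P" using that by (auto simp: h P)
    finally show ?thesis by simp
  qed
  have "comp 0 P = comp 0 (padd (psc (lin_eval (lam 0) P) (E 0)) (padd (psc (lin_eval (lam 1) P) (E 1)) (psc (lin_eval (lam 2) P) (E 2))))"
       "comp 1 P = comp 1 (padd (psc (lin_eval (lam 0) P) (E 0)) (padd (psc (lin_eval (lam 1) P) (E 1)) (psc (lin_eval (lam 2) P) (E 2))))"
       "comp 2 P = comp 2 (padd (psc (lin_eval (lam 0) P) (E 0)) (padd (psc (lin_eval (lam 1) P) (E 1)) (psc (lin_eval (lam 2) P) (E 2))))"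
    using c[of 0] c[of 1] c[of 2]
    by (cases "E 0"; cases "E 1"; cases "E 2"; simp add: algebra_simps)+
  thus ?thesis
    by (cases "padd (psc (lin_eval (lam 0) P) (E 0)) (padd (psc (lin_eval (lam 1) P) (E 1)) (psc (lin_eval (lam 2) P) (E 2)))")
       (simp add: P)
qed

lemma linform_eq: "linform l m = (if m = (1,0,0) then comp 0 l else if m = (0,1,0) then comp 1 l else if m = (0,0,1) then comp 2 l else 0)"
  by (cases l) (simp add: linform_def)

lemma frame_x:
  assumes "frame lam E" "k < 3"
  shows "linform (unitv k) = (\<Sum>j<3. scalef (comp k (E j)) (linform (lam j)))"
proof (rule ext)
  fix m
  have h: "(\<Sum>j<3. comp k (E j) * comp l (lam j)) = (if k = l then 1 else 0)" if "l < 3" for l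
    using assms that unfolding frame_def by blast
  have "(\<Sum>j<3. scalef (comp k (E j)) (linform (lam j))) m = (\<Sum>j<3. comp k (E j) * linform (lam j) m)"
    by (simp only: sum3 plus_fun_apply scalef_apply)
  also have "\<dots> = (if m = (1,0,0) then (\<Sum>j<3. comp k (E j) * comp 0 (lam j)) else
      if m = (0,1,0) then (\<Sum>j<3. comp k (E j) * comp 1 (lam j)) else
      if m = (0,0,1) then (\<Sum>j<3. comp k (E j) * comp 2 (lam j)) else 0)"
    by (simp add: linform_eq sum_distrib_left del: comp.simps)
  also have "\<dots> = linform (unitv k) m"
    using assms(2) h[of 0] h[of 1] h[of 2] by (auto simp: unitv_def linform_def numeral_3_eq_3 less_Suc_eq simp del: comp.simps)
  finally show "linform (unitv k) m = (\<Sum>j<3. scalef (comp k (E j)) (linform (lam j))) m" by simp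
qed

definition tri3 :: "'b \<Rightarrow> 'b \<Rightarrow> 'b \<Rightarrow> nat \<Rightarrow> 'b" where
  "tri3 a b c i = (if i = 0 then a else if i = 1 then b else c)"

lemma tri3_simps[simp]: "tri3 a b c 0 = a" "tri3 a b c (Suc 0) = b" "tri3 a b c (Suc (Suc 0)) = c"
  by (simp_all add: tri3_def)

lemma frame_tri3: "frame (tri3 l0 l1 l2) (tri3 e0 e1 e2) \<longleftrightarrow>
   lin_eval l0 e0 = 1 \<and> lin_eval l0 e1 = 0 \<and> lin_eval l0 e2 = 0 \<and>
   lin_eval l1 e0 = 0 \<and> lin_eval l1 e1 = 1 \<and> lin_eval l1 e2 = 0 \<and>
   lin_eval l2 e0 = 0 \<and> lin_eval l2 e1 = 0 \<and> lin_eval l2 e2 = 1 \<and>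
   (\<forall>k<3. \<forall>l<3. comp k e0 * comp l l0 + comp k e1 * comp l l1 + comp k e2 * comp l l2 = (if k = l then 1 else 0))"
  unfolding frame_def all3 sum3 by (simp del: comp.simps)

lemma frame_point_exists:
  fixes P :: "'a::field \<times> 'a \<times> 'a"
  assumes "nonzero3 P"
  shows "\<exists>lam E. frame lam E \<and> E 0 = P"
proof -
  obtain p0 p1 p2 where P: "P = (p0,p1,p2)" by (cases P)
  consider "p0 \<noteq> 0" | "p0 = 0" "p1 \<noteq> 0" | "p0 = 0" "p1 = 0" "p2 \<noteq> 0"
    using assms by (auto simp: nonzero3_def P)
  thus ?thesis
  proof cases
    case 1
    have "frame (tri3 (1/p0,0,0) (-p1/p0,1,0) (-p2/p0,0,1)) (tri3 P (0,1,0) (0,0,1))"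
      unfolding frame_tri3 all3 using 1 by (simp add: P field_simps)
    thus ?thesis by force
  next
    case 2
    have "frame (tri3 (0,1/p1,0) (1,-p0/p1,0) (0,-p2/p1,1)) (tri3 P (1,0,0) (0,0,1))"
      unfolding frame_tri3 all3 using 2 by (simp add: P field_simps)
    thus ?thesis by force
  next
    case 3
    have "frame (tri3 (0,0,1/p2) (1,0,-p0/p2) (0,1,-p1/p2)) (tri3 P (1,0,0) (0,1,0))"
      unfolding frame_tri3 all3 using 3 by (simp add: P field_simps)
    thus ?thesis by force
  qed
qed

lemma frame_line_exists:
  fixes L :: "'a::field \<times> 'a \<times> 'a"
  assumes "nonzero3 L"
  shows "\<exists>lam E. frame lam E \<and> lam 0 = L"
  using frame_point_exists[OF assms] frame_swap by blast

lemma frame_shear: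
  assumes "frame lam E"
  shows "frame (tri3 (lam 0) (padd (lam (Suc 0)) (psc (-c) (lam (Suc (Suc 0))))) (lam (Suc (Suc 0))))
     (tri3 (E 0) (E (Suc 0)) (padd (E (Suc (Suc 0))) (psc c (E (Suc 0)))))"
proof -
  have A: "lin_eval (lam i) (E j) = (if i = j then 1 else 0)" if "i < 3" "j < 3" for i j
    using assms that unfolding frame_def by blast
  have B: "(\<Sum>j<3. comp k (E j) * comp l (lam j)) = (if k = l then 1 else 0)" if "k < 3" "l < 3" for k l
    using assms that unfolding frame_def by blast
  have A': "lin_eval (lam 0) (E 0) = 1" "lin_eval (lam 0) (E (Suc 0)) = 0" "lin_eval (lam 0) (E (Suc (Suc 0))) = 0"
     "lin_eval (lam (Suc 0)) (E 0) = 0" "lin_eval (lam (Suc 0)) (E (Suc 0)) = 1" "lin_eval (lam (Suc 0)) (E (Suc (Suc 0))) = 0"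
     "lin_eval (lam (Suc (Suc 0))) (E 0) = 0" "lin_eval (lam (Suc (Suc 0))) (E (Suc 0)) = 0" "lin_eval (lam (Suc (Suc 0))) (E (Suc (Suc 0))) = 1"
    by (simp_all add: A)
  have le_add1: "lin_eval (padd a b) e = lin_eval a e + lin_eval b e" for a b e :: "'a \<times> 'a \<times> 'a"
    by (cases a; cases b; cases e) (simp add: algebra_simps)
  have le_add2: "lin_eval e (padd a b) = lin_eval e a + lin_eval e b" for a b e :: "'a \<times> 'a \<times> 'a"
    by (cases a; cases b; cases e) (simp add: algebra_simps)
  have le_sc1: "lin_eval (psc c a) e = c * lin_eval a e" for a e :: "'a \<times> 'a \<times> 'a" and c
    by (cases a; cases e) (simp add: algebra_simps)
  have le_sc2: "lin_eval e (psc c a) = c * lin_eval e a" for a e :: "'a \<times> 'a \<times> 'a" and c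
    by (cases a; cases e) (simp add: algebra_simps)
  have cp: "comp k (padd a b) = comp k a + comp k b" for k a b
    by (cases a; cases b) simp
  have cs: "comp k (psc c a) = c * comp k a" for k a c
    by (cases a) simp
  let ?l1 = "lam (Suc 0)" and ?l2 = "lam (Suc (Suc 0))" and ?e1 = "E (Suc 0)" and ?e2 = "E (Suc (Suc 0))"
  have "(\<forall>k<3. \<forall>l<3. comp k (E 0) * comp l (lam 0) + comp k ?e1 * comp l (padd ?l1 (psc (-c) ?l2))
      + comp k (padd ?e2 (psc c ?e1)) * comp l ?l2 = (if k = l then 1 else 0))"
  proof (intro allI impI)
    fix k l :: nat assume "k < 3" "l < 3"
    have "comp k (E 0) * comp l (lam 0) + comp k ?e1 * comp l (padd ?l1 (psc (-c) ?l2))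
      + comp k (padd ?e2 (psc c ?e1)) * comp l ?l2 = (\<Sum>j<3. comp k (E j) * comp l (lam j))"
      by (simp only: sum3 cp cs) (simp add: algebra_simps)
    thus "comp k (E 0) * comp l (lam 0) + comp k ?e1 * comp l (padd ?l1 (psc (-c) ?l2))
      + comp k (padd ?e2 (psc c ?e1)) * comp l ?l2 = (if k = l then 1 else 0)"
      using B \<open>k<3\<close> \<open>l<3\<close> by simp
  qed
  thus ?thesis unfolding frame_tri3
    by (simp add: A' le_add1 le_add2 le_sc1 le_sc2 del: comp.simps)
qed


lemma CC_one: "CC (1 :: 'a::field mp) = onef"
  by (rule ext) (auto simp: CC_def onef_def coeff_1 split: prod.splits)

lemma NN_onef: "NN (onef :: expo \<Rightarrow> 'a::field) = 1"
  by (rule CC_inj) (simp add: CC_NN fs_onef CC_one)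

lemma NN_pw: "g \<in> hom_forms 1 \<Longrightarrow> NN (pw g n) = (NN g :: 'a::field mp) ^ n"
proof (induction n)
  case (Suc n)
  have "fs g" "fs (pw g n)" using Suc hom_fs pw_hom by blast+
  thus ?case using Suc by (simp add: pw_Suc NN_pmul)
qed (simp add: NN_onef)

definition lampow :: "(nat \<Rightarrow> 'a::field \<times> 'a \<times> 'a) \<Rightarrow> expo \<Rightarrow> expo \<Rightarrow> 'a" where
  "lampow lam m = (case m of (a,b,c) \<Rightarrow>
     pmul (pmul (pw (linform (lam 0)) a) (pw (linform (lam 1)) b)) (pw (linform (lam 2)) c))"

lemma lampow_hom: "lampow lam m \<in> hom_forms (edeg m)"
proof -
  obtain a b c where m: "m = (a,b,c)" by (cases m)
  show ?thesis unfolding lampow_def m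
    by (auto intro!: pmul_hom[of _ "a+b" _ c, simplified] pmul_hom pw_hom linform_hom)
qed

lemma fs_lampow: "fs (lampow lam m)"
  using hom_fs lampow_hom by blast

lemma fs_pw: "fs (pw (linform l) n)"
  using hom_fs pw_hom linform_hom by blast

lemma NN_lampow: "NN (lampow lam (a,b,c)) =
   NN (linform (lam 0)) ^ a * NN (linform (lam 1)) ^ b * NN (linform (lam 2)) ^ c"
  by (simp add: lampow_def NN_pmul fs_pmul fs_pw NN_pw[OF linform_hom])

definition shift :: "nat \<Rightarrow> expo \<Rightarrow> expo" where
  "shift j m = (case m of (a,b,c) \<Rightarrow> if j = 0 then (Suc a,b,c) else if j = 1 then (a, Suc b, c) else (a,b,Suc c))"

lemma edeg_shift: "edeg (shift j m) = Suc (edeg m)"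
  by (cases m) (simp add: shift_def)

lemma lampow_mul:
  assumes "j < 3"
  shows "pmul (linform (lam j)) (lampow lam m) = lampow lam (shift j m)"
proof -
  obtain a b c where m: "m = (a,b,c)" by (cases m)
  show ?thesis
  proof (rule NN_inj)
    show "fs (pmul (linform (lam j)) (lampow lam m))" by (simp add: fs_pmul fs_linform fs_lampow)
    show "fs (lampow lam (shift j m))" by (rule fs_lampow)
    show "NN (pmul (linform (lam j)) (lampow lam m)) = NN (lampow lam (shift j m))"
      using assms
      by (auto simp: NN_pmul fs_linform fs_lampow m shift_def NN_lampow numeral_3_eq_3 less_Suc_eq
          numeral_2_eq_2 mult_ac)
  qed
qed

definition md :: "nat \<Rightarrow> (expo \<Rightarrow> 'a::zero) \<Rightarrow> expo \<Rightarrow> 'a" where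
  "md k f m = (case m of (a,b,c) \<Rightarrow>
     if k = 0 then f (Suc a, b, c)
     else if k = 1 then (if a = 0 then f (0, Suc b, c) else 0)
     else (if a = 0 \<and> b = 0 then f (0, 0, Suc c) else 0))"

lemma md_hom: assumes "f \<in> hom_forms (Suc t)" shows "md k f \<in> hom_forms t"
  unfolding hom_forms_def
proof (intro CollectI allI impI)
  fix m assume "md k f m \<noteq> 0"
  obtain a b c where m: "m = (a,b,c)" by (cases m)
  show "edeg m = t" using \<open>md k f m \<noteq> 0\<close>
    by (auto simp: md_def m split: if_splits dest: hom_formsD[OF assms])
qed

lemma md_decomp:
  assumes "f \<in> hom_forms (Suc t)"
  shows "f = (\<Sum>k<3. pmul (linform (unitv k)) (md k f))"
proof (rule ext, clarify)
  fix a b c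
  have f0: "f (0,0,0) = 0" using hom_formsD[OF assms, of "(0,0,0)"] by auto
  show "f (a,b,c) = (\<Sum>k<3. pmul (linform (unitv k)) (md k f)) (a,b,c)"
    unfolding sum3 plus_fun_apply
    by (cases a; cases b; cases c) (simp_all add: unitv_def pmul_linform md_def f0 del: pmul.simps)
qed

lemma span_image_explicit:
  assumes "finite S" "x \<in> vs.span (g ` S)"
  shows "\<exists>u. x = (\<Sum>s\<in>S. scalef (u s) (g s :: expo \<Rightarrow> 'a::field))"
proof -
  let ?T = "{x. \<exists>u. x = (\<Sum>s\<in>S. scalef (u s) (g s))}"
  have sub: "vs.subspace ?T"
    unfolding vs.subspace_def
  proof (intro conjI allI impI ballI)
    show "0 \<in> ?T" by (rule CollectI, rule exI[of _ "\<lambda>_. 0"]) (simp add: scalef_def fun_eq_iff)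
    fix x y assume "x \<in> ?T" "y \<in> ?T"
    then obtain u v where "x = (\<Sum>s\<in>S. scalef (u s) (g s))" "y = (\<Sum>s\<in>S. scalef (v s) (g s))" by auto
    hence "x + y = (\<Sum>s\<in>S. scalef (u s + v s) (g s))"
      by (simp add: vs.scale_left_distrib sum.distrib)
    thus "x + y \<in> ?T" by (intro CollectI exI[of _ "\<lambda>s. u s + v s"])
  next
    fix c x assume "x \<in> ?T"
    then obtain u where "x = (\<Sum>s\<in>S. scalef (u s) (g s))" by auto
    hence "scalef c x = (\<Sum>s\<in>S. scalef (c * u s) (g s))"
      by (simp add: vs.scale_sum_right vs.scale_scale)
    thus "scalef c x \<in> ?T" by (intro CollectI exI[of _ "\<lambda>s. c * u s"])
  qed
  have "g ` S \<subseteq> ?T"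
  proof
    fix y assume "y \<in> g ` S"
    then obtain s0 where s0: "s0 \<in> S" "y = g s0" by auto
    have "(\<Sum>s\<in>S. scalef (if s = s0 then 1 else 0) (g s)) = (\<Sum>s\<in>S. if s = s0 then g s else 0)"
      by (rule sum.cong) (auto simp: scalef_def fun_eq_iff)
    also have "\<dots> = g s0" using s0 assms(1) by (simp add: sum.delta')
    finally show "y \<in> ?T" using s0 by (intro CollectI exI[of _ "\<lambda>s. if s = s0 then 1 else 0"]) simp
  qed
  hence "vs.span (g ` S) \<subseteq> ?T" using sub by (rule vs.span_minimal)
  thus ?thesis using assms(2) by blast
qed

lemma unitv_lt3: "k < 3 \<Longrightarrow> unitv k = unitv k" ..

theorem change_vars:
  assumes fr: "frame lam E" and f: "f \<in> hom_forms t"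
  shows "f \<in> vs.span (lampow lam ` mons t)"
  using f
proof (induction t arbitrary: f)
  case 0
  have "f = scalef (f (0,0,0)) onef"
    using 0 by (auto simp: fun_eq_iff onef_def hom_forms_def)
  moreover have "lampow lam (0,0,0) = onef"
    by (simp add: lampow_def pmul_onef)
  moreover have "(0,0,0) \<in> mons 0" by (simp add: mons_def)
  ultimately show ?case by (metis image_eqI vs.span_base vs.span_scale)
next
  case (Suc t)
  have IH: "md k f \<in> vs.span (lampow lam ` mons t)" for k
    using Suc.IH md_hom Suc.prems by blast
  have step: "pmul (linform (lam j)) g \<in> vs.span (lampow lam ` mons (Suc t))"
    if "j < 3" "g \<in> vs.span (lampow lam ` mons t)" for j g
  proof -
    have "pmul (linform (lam j)) g \<in> pmul (linform (lam j)) ` vs.span (lampow lam ` mons t)"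
      using that by blast
    also have "\<dots> = vs.span (pmul (linform (lam j)) ` lampow lam ` mons t)"
      by (rule span_pmul[symmetric])
    also have "\<dots> \<subseteq> vs.span (lampow lam ` mons (Suc t))"
      by (rule vs.span_mono) (auto simp: lampow_mul[OF \<open>j<3\<close>] mons_def edeg_shift)
    finally show ?thesis .
  qed
  have "f = (\<Sum>k<3. pmul (linform (unitv k)) (md k f))"
    by (rule md_decomp[OF Suc.prems])
  also have "\<dots> = (\<Sum>k<3. \<Sum>j<3. scalef (comp k (E j)) (pmul (linform (lam j)) (md k f)))"
    by (rule sum.cong[OF refl]) (simp add: frame_x[OF fr] pmul_sum_left pmul_scalef_left)
  also have "\<dots> \<in> vs.span (lampow lam ` mons (Suc t))"
    by (intro vs.span_sum vs.span_scale step IH) auto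
  finally show ?case .
qed

corollary change_vars_explicit:
  assumes fr: "frame lam E" and f: "f \<in> hom_forms t"
  shows "\<exists>u. f = (\<Sum>m\<in>mons t. scalef (u m) (lampow lam m))"
  using span_image_explicit[OF finite_mons change_vars[OF assms]] .


lemma frame_ev:
  assumes "frame lam E" "i < 3" "j < 3"
  shows "lin_eval (lam i) (E j) = (if i = j then 1 else 0)"
  using assms unfolding frame_def by blast

lemma rest_lampow:
  "rest (lampow lam (a,b,c)) A B =
    [:lin_eval (lam 0) A, lin_eval (lam 0) B:] ^ a * [:lin_eval (lam 1) A, lin_eval (lam 1) B:] ^ b *
    ([:lin_eval (lam 2) A, lin_eval (lam 2) (B :: 'a::field_char_0 \<times> _):] ^ c)"
  by (simp add: lampow_def rest_pmul fs_pmul fs_pw rest_pw[OF linform_hom] rest_linform)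

lemma x_pow_monom: "[:0, 1:] ^ n = (monom 1 n :: 'a::comm_semiring_1 poly)"
  by (simp add: monom_altdef)

lemma pc1: "[:1:] = (1::'a::comm_semiring_1 poly)"
  by (simp add: one_pCons)

lemma x_pow_monom': "pCons 0 1 ^ n = (monom 1 n :: 'a::comm_semiring_1 poly)"
  using x_pow_monom[of n] by (simp add: one_pCons)

lemma sum_mons_delta:
  assumes "\<And>m. m \<in> mons t \<Longrightarrow> Q m \<longleftrightarrow> m = m0"
  shows "(\<Sum>m\<in>mons t. if Q m then g m else 0) = (if m0 \<in> mons t then g m0 else (0::'a::comm_monoid_add))"
proof -
  have "(\<Sum>m\<in>mons t. if Q m then g m else 0) = (\<Sum>m\<in>mons t. if m = m0 then g m else 0)"
    by (rule sum.cong) (auto simp: assms)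
  thus ?thesis using finite_mons by (simp add: sum.delta')
qed

lemma sum_mons_none:
  assumes "\<And>m. m \<in> mons t \<Longrightarrow> \<not> Q m"
  shows "(\<Sum>m\<in>mons t. if Q m then g m else 0) = (0::'a::comm_monoid_add)"
  by (rule sum.neutral) (auto simp: assms)

lemma sq_gen:
  assumes "2 \<le> t" "lin_eval l1 P = 0" "lin_eval l2 P = 0" "g \<in> hom_forms (t - 2)"
  shows "pmul (pmul (linform l1) (linform l2)) g \<in> sq_point_ideal_deg P t"
  unfolding sq_point_ideal_deg_def using assms by (intro vs.span_base) blast

lemma lampow_shift2:
  assumes "i < 3" "j < 3"
  shows "lampow lam (shift i (shift j m)) = pmul (pmul (linform (lam i)) (linform (lam j))) (lampow lam m)"
  by (simp add: lampow_mul[symmetric] assms pmul_assoc fs_linform fs_lampow)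

lemma psi_zero:
  fixes P :: "'a::field_char_0 \<times> 'a \<times> 'a"
  assumes fr: "frame lam E" and E0: "E 0 = P" and f: "f \<in> hom_forms t"
    and z0: "coeff (rest f P (E 1)) 0 = 0" and z1: "coeff (rest f P (E 1)) 1 = 0"
    and z2: "coeff (rest f P (E 2)) 1 = 0"
  shows "f \<in> sq_point_ideal_deg P t"
proof -
  have le: "lin_eval (lam i) (E j) = (if i = j then 1 else 0)" if "i < 3" "j < 3" for i j
    using frame_ev[OF fr that] .
  have L: "lin_eval (lam 0) P = 1" "lin_eval (lam 1) P = 0" "lin_eval (lam 2) P = 0"
    "lin_eval (lam 0) (E 1) = 0" "lin_eval (lam 1) (E 1) = 1" "lin_eval (lam 2) (E 1) = 0"
    "lin_eval (lam 0) (E 2) = 0" "lin_eval (lam 1) (E 2) = 0" "lin_eval (lam 2) (E 2) = 1"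
    using le[of 0 0] le[of 1 0] le[of 2 0] le[of 0 1] le[of 1 1] le[of 2 1] le[of 0 2] le[of 1 2] le[of 2 2]
    by (simp_all add: E0)
  obtain u where fu: "f = (\<Sum>m\<in>mons t. scalef (u m) (lampow lam m))"
    using change_vars_explicit[OF fr f] by blast
  have fsl: "\<And>m. fs (scalef (u m) (lampow lam m))" by (simp add: fs_scalef fs_lampow)
  have r1: "rest (lampow lam m) P (E 1) = (case m of (a,b,c) \<Rightarrow> if c = 0 then monom 1 b else 0)" for m
    using L by (cases m) (simp add: rest_lampow x_pow_monom x_pow_monom' pc1)
  have r2: "rest (lampow lam m) P (E 2) = (case m of (a,b,c) \<Rightarrow> if b = 0 then monom 1 c else 0)" for m
    using L by (cases m) (simp add: rest_lampow x_pow_monom x_pow_monom' pc1)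
  have c1: "coeff (rest f P (E 1)) j = (\<Sum>m\<in>mons t. if (case m of (a,b,c) \<Rightarrow> c = 0 \<and> b = j) then u m else 0)" for j
    unfolding fu
    by (simp add: rest_sum fsl rest_scalef fs_lampow coeff_sum r1[simplified] split: prod.splits cong: if_cong)
      (rule sum.cong, auto split: prod.splits)
  have c2: "coeff (rest f P (E 2)) j = (\<Sum>m\<in>mons t. if (case m of (a,b,c) \<Rightarrow> b = 0 \<and> c = j) then u m else 0)" for j
    unfolding fu
    by (simp add: rest_sum fsl rest_scalef fs_lampow coeff_sum r2 split: prod.splits cong: if_cong)
      (rule sum.cong, auto split: prod.splits)
  have u0: "u (t,0,0) = 0"
  proof -
    have "coeff (rest f P (E 1)) 0 = u (t,0,0)"
      unfolding c1 by (subst sum_mons_delta[of _ _ "(t,0,0)"]) (auto simp: mons_def)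
    thus ?thesis using z0 by simp
  qed
  have u1: "u (t-1,1,0) = 0" if "1 \<le> t"
  proof -
    have "coeff (rest f P (E 1)) 1 = u (t-1,1,0)"
      unfolding c1 using that by (subst sum_mons_delta[of _ _ "(t-1,1,0)"]) (auto simp: mons_def)
    thus ?thesis using z1 by simp
  qed
  have u2: "u (t-1,0,1) = 0" if "1 \<le> t"
  proof -
    have "coeff (rest f P (E 2)) 1 = u (t-1,0,1)"
      unfolding c2 using that by (subst sum_mons_delta[of _ _ "(t-1,0,1)"]) (auto simp: mons_def)
    thus ?thesis using z2 by simp
  qed
  have "scalef (u m) (lampow lam m) \<in> sq_point_ideal_deg P t" if m: "m \<in> mons t" for m
  proof -
    obtain a b c where mm: "m = (a,b,c)" by (cases m)
    have abc: "a + b + c = t" using m by (simp add: mons_def mm)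
    consider "b + c \<le> 1" | "2 \<le> b" | "2 \<le> c" | "1 \<le> b" "1 \<le> c" by linarith
    thus ?thesis
    proof cases
      case 1
      hence "u m = 0" using u0 u1 u2 abc
        by (cases b; cases c) (auto simp: mm)
      thus ?thesis by (simp add: scalef_def vs.span_zero sq_point_ideal_deg_def zero_fun_def[symmetric])
    next
      case 2
      have e: "m = shift 1 (shift 1 (a, b-2, c))" using 2 by (auto simp: mm shift_def)
      have s: "lampow lam m = pmul (pmul (linform (lam 1)) (linform (lam 1))) (lampow lam (a,b-2,c))"
        unfolding e by (rule lampow_shift2) simp_all
      have "lampow lam m \<in> sq_point_ideal_deg P t" unfolding s
        by (rule sq_gen) (use 2 abc L lampow_hom[of lam "(a,b-2,c)"] in auto)
      thus ?thesis unfolding sq_point_ideal_deg_def by (rule vs.span_scale)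
    next
      case 3
      have e: "m = shift 2 (shift 2 (a, b, c-2))" using 3 by (auto simp: mm shift_def)
      have s: "lampow lam m = pmul (pmul (linform (lam 2)) (linform (lam 2))) (lampow lam (a,b,c-2))"
        unfolding e by (rule lampow_shift2) simp_all
      have "lampow lam m \<in> sq_point_ideal_deg P t" unfolding s
        by (rule sq_gen) (use 3 abc L lampow_hom[of lam "(a,b,c-2)"] in auto)
      thus ?thesis unfolding sq_point_ideal_deg_def by (rule vs.span_scale)
    next
      case 4
      have e: "m = shift 1 (shift 2 (a, b-1, c-1))" using 4 by (auto simp: mm shift_def)
      have s: "lampow lam m = pmul (pmul (linform (lam 1)) (linform (lam 2))) (lampow lam (a,b-1,c-1))"
        unfolding e by (rule lampow_shift2) simp_all
      have "lampow lam m \<in> sq_point_ideal_deg P t" unfolding s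
        by (rule sq_gen) (use 4 abc L lampow_hom[of lam "(a,b-1,c-1)"] in \<open>auto simp: numeral_2_eq_2\<close>)
      thus ?thesis unfolding sq_point_ideal_deg_def by (rule vs.span_scale)
    qed
  qed
  thus ?thesis unfolding fu sq_point_ideal_deg_def by (intro vs.span_sum) auto
qed


lemma sq_hom_dv:
  fixes P :: "'a::field_char_0 \<times> 'a \<times> 'a"
  assumes "f \<in> sq_point_ideal_deg P t"
  shows "f \<in> hom_forms t \<and> dv P f"
proof -
  let ?T = "{f. f \<in> hom_forms t \<and> dv P f}"
  have sub: "vs.subspace ?T"
    unfolding vs.subspace_def
  proof (intro conjI ballI allI)
    show "0 \<in> ?T" using vs.subspace_0[OF subspace_hom] dv_zero by blast
    fix x y assume "x \<in> ?T" "y \<in> ?T"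
    thus "x + y \<in> ?T" using vs.subspace_add[OF subspace_hom] dv_add hom_fs by blast
  next
    fix c x assume "x \<in> ?T"
    thus "scalef c x \<in> ?T" using vs.subspace_scale[OF subspace_hom] dv_scalef hom_fs by blast
  qed
  have gen: "{pmul (pmul (linform l1) (linform l2)) (g :: expo \<Rightarrow> 'a) | l1 l2 g.
        2 \<le> t \<and> lin_eval l1 P = 0 \<and> lin_eval l2 P = 0 \<and> g \<in> hom_forms (t - 2)} \<subseteq> ?T"
  proof clarify
    fix l1 l2 and g :: "expo \<Rightarrow> 'a" assume h: "2 \<le> t" "lin_eval l1 P = 0" "lin_eval l2 P = 0" "g \<in> hom_forms (t - 2)"
    have "pmul (pmul (linform l1) (linform l2)) g \<in> hom_forms ((1+1) + (t-2))"
      by (intro pmul_hom linform_hom h(4))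
    moreover have "dv P (pmul (pmul (linform l1) (linform l2)) g)"
      by (intro dv_mul_right dv_mul_vanish fs_pmul fs_linform hom_fs[OF h(4)])
         (simp_all add: ev_linform h)
    ultimately show "pmul (pmul (linform l1) (linform l2)) g \<in> hom_forms t \<and>
        dv P (pmul (pmul (linform l1) (linform l2)) g)" using h(1)
      by (metis Suc_1 add_2_eq_Suc le_add_diff_inverse one_add_one)
  qed
  have "sq_point_ideal_deg P t \<subseteq> {f \<in> hom_forms t. dv P f}"
    unfolding sq_point_ideal_deg_def by (rule vs.span_minimal[OF gen sub])
  thus ?thesis using assms by blast
qed

lemma dv_sq:
  fixes P :: "'a::field_char_0 \<times> 'a \<times> 'a"
  assumes "nonzero3 P" "f \<in> hom_forms t" "dv P f"
  shows "f \<in> sq_point_ideal_deg P t"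
proof -
  obtain lam E where fr: "frame lam E" and E0: "E 0 = P"
    using frame_point_exists[OF assms(1)] by blast
  have h: "coeff (rest f P v) 0 = 0 \<and> coeff (rest f P v) 1 = 0" for v
    using assms(3) unfolding dv_def by blast
  show ?thesis by (rule psi_zero[OF fr E0 assms(2)]) (simp_all only: h)
qed

lemma fin_ideal_eq:
  fixes Y :: "('a::field_char_0 \<times> 'a \<times> 'a) set"
  assumes "\<And>P. P \<in> Y \<Longrightarrow> nonzero3 P"
  shows "fin_ideal_deg Y t = {f \<in> hom_forms t. \<forall>P\<in>Y. dv P f}"
proof (rule set_eqI)
  fix f
  show "f \<in> fin_ideal_deg Y t \<longleftrightarrow> f \<in> {f \<in> hom_forms t. \<forall>P\<in>Y. dv P f}"
  proof
    assume "f \<in> fin_ideal_deg Y t"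
    hence h: "f \<in> hom_forms t" "\<And>P. P \<in> Y \<Longrightarrow> f \<in> sq_point_ideal_deg P t"
      unfolding fin_ideal_deg_def by auto
    show "f \<in> {f \<in> hom_forms t. \<forall>P\<in>Y. dv P f}" using h sq_hom_dv by blast
  next
    assume "f \<in> {f \<in> hom_forms t. \<forall>P\<in>Y. dv P f}"
    hence h: "f \<in> hom_forms t" "\<And>P. P \<in> Y \<Longrightarrow> dv P f" by auto
    have "f \<in> sq_point_ideal_deg P t" if "P \<in> Y" for P using dv_sq[OF assms[OF that] h(1) h(2)[OF that]] .
    thus "f \<in> fin_ideal_deg Y t" unfolding fin_ideal_deg_def using h(1) by blast
  qed
qed

lemma line_div:
  fixes lam :: "nat \<Rightarrow> 'a::field_char_0 \<times> 'a \<times> 'a"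
  assumes fr: "frame lam E" and f: "f \<in> hom_forms t" and r: "rest f (E 1) (E 2) = 0"
  shows "\<exists>g \<in> hom_forms (t - 1). f = pmul (linform (lam 0)) g"
proof -
  have le: "lin_eval (lam i) (E j) = (if i = j then 1 else 0)" if "i < 3" "j < 3" for i j
    using frame_ev[OF fr that] .
  have L: "lin_eval (lam 0) (E 1) = 0" "lin_eval (lam 1) (E 1) = 1" "lin_eval (lam 2) (E 1) = 0"
    "lin_eval (lam 0) (E 2) = 0" "lin_eval (lam 1) (E 2) = 0" "lin_eval (lam 2) (E 2) = 1"
    using le[of 0 1] le[of 1 1] le[of 2 1] le[of 0 2] le[of 1 2] le[of 2 2] by simp_all
  obtain u where fu: "f = (\<Sum>m\<in>mons t. scalef (u m) (lampow lam m))"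
    using change_vars_explicit[OF fr f] by blast
  have fsl: "\<And>m. fs (scalef (u m) (lampow lam m))" by (simp add: fs_scalef fs_lampow)
  have r1: "rest (lampow lam m) (E 1) (E 2) = (case m of (a,b,c) \<Rightarrow> if a = 0 then monom 1 c else 0)" for m
    using L by (cases m) (simp add: rest_lampow x_pow_monom x_pow_monom' pc1)
  have c1: "coeff (rest f (E 1) (E 2)) j = (\<Sum>m\<in>mons t. if (case m of (a,b,c) \<Rightarrow> a = 0 \<and> c = j) then u m else 0)" for j
    unfolding fu
    by (simp add: rest_sum fsl rest_scalef fs_lampow coeff_sum r1[simplified] split: prod.splits cong: if_cong)
      (rule sum.cong, auto split: prod.splits)
  have u0: "u m = 0" if "m \<in> mons t" "fst m = 0" for m
  proof -
    obtain a b c where m: "m = (a,b,c)" by (cases m)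
    have "coeff (rest f (E 1) (E 2)) c = u (0,b,c)"
      unfolding c1 using that by (subst sum_mons_delta[of _ _ "(0,b,c)"]) (auto simp: mons_def m)
    thus ?thesis using r that m by simp
  qed
  define g where "g = (\<Sum>m\<in>mons t. if fst m = 0 then 0 else scalef (u m) (lampow lam (fst m - 1, snd m)))"
  have "g \<in> hom_forms (t - 1)"
    unfolding g_def
  proof (rule vs.subspace_sum[OF subspace_hom])
    fix m assume "m \<in> mons t"
    then show "(if fst m = 0 then 0 else scalef (u m) (lampow lam (fst m - 1, snd m))) \<in> hom_forms (t - 1)"
      using lampow_hom[of lam "(fst m - 1, snd m)"]
      by (cases m) (auto simp: mons_def vs.subspace_0[OF subspace_hom] vs.subspace_scale[OF subspace_hom])
  qed
  moreover have "f = pmul (linform (lam 0)) g"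
  proof -
    have "pmul (linform (lam 0)) g = (\<Sum>m\<in>mons t. if fst m = 0 then 0 else scalef (u m) (lampow lam m))"
      unfolding g_def pmul_sum_right
    proof (rule sum.cong[OF refl])
      fix m assume "m \<in> mons t"
      obtain a b c where m: "m = (a,b,c)" by (cases m)
      show "pmul (linform (lam 0)) (if fst m = 0 then 0 else scalef (u m) (lampow lam (fst m - 1, snd m))) =
         (if fst m = 0 then 0 else scalef (u m) (lampow lam m))"
        using lampow_mul[of 0 lam "(a-1,b,c)"] by (auto simp: m pmul_scalef_right shift_def)
    qed
    also have "\<dots> = f" unfolding fu
      by (rule sum.cong[OF refl]) (auto simp: u0 scalef_def zero_fun_def)
    finally show ?thesis by simp
  qed
  ultimately show ?thesis by blast
qed


definition lin :: "((expo \<Rightarrow> 'a::field) \<Rightarrow> (expo \<Rightarrow> 'a)) \<Rightarrow> bool" where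
  "lin g \<longleftrightarrow> (\<forall>x y. g (x + y) = g x + g y) \<and> (\<forall>c x. g (scalef c x) = scalef c (g x))"

lemma lin_hom: "lin g \<Longrightarrow> module_hom (scalef :: 'a::field \<Rightarrow> _) scalef g"
  unfolding module_hom_iff lin_def using vs_scalef module_iff_vector_space by blast

definition fdim :: "(expo \<Rightarrow> 'a::field) set \<Rightarrow> bool" where
  "fdim S \<longleftrightarrow> (\<exists>F. finite F \<and> S \<subseteq> vs.span F)"

lemma fdim_basis:
  assumes "fdim S"
  obtains B where "B \<subseteq> S" "vs.independent B" "S \<subseteq> vs.span B" "finite B" "card B = vs.dim S"
proof -
  obtain F where F: "finite F" "S \<subseteq> vs.span F" using assms fdim_def by blast
  obtain B where B: "B \<subseteq> S" "vs.independent B" "S \<subseteq> vs.span B" "card B = vs.dim S"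
    by (rule vs.basis_exists)
  have "finite B" using vs.independent_span_bound[OF F(1) B(2)] B(1) F(2) by blast
  thus ?thesis using B that by blast
qed

lemma fdim_subset: "S \<subseteq> T \<Longrightarrow> fdim T \<Longrightarrow> fdim S"
  unfolding fdim_def by blast

lemma dim_mono2: "S \<subseteq> T \<Longrightarrow> fdim T \<Longrightarrow> vs.dim S \<le> vs.dim T"
proof -
  assume "S \<subseteq> T" "fdim T"
  then obtain B where "B \<subseteq> T" "T \<subseteq> vs.span B" "finite B" "card B = vs.dim T"
    using fdim_basis by metis
  thus ?thesis using vs.dim_le_card[of S B] \<open>S \<subseteq> T\<close> by auto
qed

lemma lin_span_image: "lin g \<Longrightarrow> vs.span (g ` S) = g ` vs.span S"
  using module_hom.span_image[OF lin_hom] by blast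

lemma fdim_image: "lin g \<Longrightarrow> fdim S \<Longrightarrow> fdim (g ` S)"
  unfolding fdim_def by (metis finite_imageI image_mono lin_span_image)

lemma dim_image_le2:
  assumes g: "lin g" and S: "fdim S"
  shows "vs.dim (g ` S) \<le> vs.dim S"
proof -
  obtain B where B: "B \<subseteq> S" "vs.independent B" "S \<subseteq> vs.span B" "finite B" "card B = vs.dim S"
    by (rule fdim_basis[OF S])
  have "g ` S \<subseteq> vs.span (g ` B)" using B(3) lin_span_image[OF g, of B] by blast
  hence "vs.dim (g ` S) \<le> card (g ` B)" using B(4) by (intro vs.dim_le_card) auto
  also have "\<dots> \<le> card B" using B(4) by (rule card_image_le)
  finally show ?thesis using B(5) by simp
qed

lemma rank_nullity_le:
  assumes g: "lin g" and S: "fdim S" and sub: "vs.subspace S"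
  shows "vs.dim S \<le> vs.dim (S \<inter> {x. g x = 0}) + vs.dim (g ` S)"
proof -
  interpret h: module_hom "scalef :: 'a \<Rightarrow> _" scalef g by (rule lin_hom[OF g])
  define K where "K = S \<inter> {x. g x = 0}"
  define T where "T = g ` S"
  have fK: "fdim K" unfolding K_def by (rule fdim_subset[OF _ S]) blast
  obtain B0 where B0: "B0 \<subseteq> K" "vs.independent B0" "K \<subseteq> vs.span B0" "finite B0" "card B0 = vs.dim K"
    by (rule fdim_basis[OF fK])
  have fT: "fdim T" unfolding T_def by (rule fdim_image[OF g S])
  obtain C where C: "C \<subseteq> T" "vs.independent C" "T \<subseteq> vs.span C" "finite C" "card C = vs.dim T"
    by (rule fdim_basis[OF fT])
  define pre where "pre c = (SOME x. x \<in> S \<and> g x = c)" for c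
  have pre: "pre c \<in> S \<and> g (pre c) = c" if "c \<in> C" for c
  proof -
    have "c \<in> g ` S" using C(1) that T_def by blast
    hence "\<exists>x. x \<in> S \<and> g x = c" by blast
    thus ?thesis unfolding pre_def by (rule someI_ex)
  qed
  have "S \<subseteq> vs.span (B0 \<union> pre ` C)"
  proof
    fix x assume x: "x \<in> S"
    have "g x \<in> vs.span C" using C(3) x T_def by blast
    also have "vs.span C = vs.span (g ` pre ` C)"
    proof -
      have "g ` pre ` C = id ` C" unfolding image_image by (rule image_cong) (simp_all add: pre)
      thus ?thesis by simp
    qed
    also have "\<dots> = g ` vs.span (pre ` C)" by (rule lin_span_image[OF g])
    finally have "g x \<in> g ` vs.span (pre ` C)" .
    then obtain y where y1: "y \<in> vs.span (pre ` C)" and y2': "g x = g y" by (rule imageE)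
    have y: "y \<in> vs.span (pre ` C)" "g y = g x" using y1 y2' by simp_all
    have "pre ` C \<subseteq> S" using pre by blast
    hence "vs.span (pre ` C) \<subseteq> S" using sub by (rule vs.span_minimal)
    hence yS: "y \<in> S" using y(1) by blast
    have "x - y \<in> S" by (rule vs.subspace_diff[OF sub x yS])
    moreover have "g (x - y) = 0" by (simp add: h.diff y(2))
    ultimately have "x - y \<in> K" unfolding K_def by blast
    hence "x - y \<in> vs.span (B0 \<union> pre ` C)" using B0(3) vs.span_mono[of B0 "B0 \<union> pre ` C"] by blast
    moreover have "y \<in> vs.span (B0 \<union> pre ` C)" using y(1) vs.span_mono[of "pre ` C" "B0 \<union> pre ` C"] by blast
    ultimately have "(x - y) + y \<in> vs.span (B0 \<union> pre ` C)" by (rule vs.span_add)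
    thus "x \<in> vs.span (B0 \<union> pre ` C)" by simp
  qed
  hence "vs.dim S \<le> card (B0 \<union> pre ` C)" using B0(4) C(4) by (intro vs.dim_le_card) auto
  also have "\<dots> \<le> card B0 + card (pre ` C)" by (rule card_Un_le)
  also have "\<dots> \<le> card B0 + card C" using C(4) card_image_le by auto
  finally show ?thesis using B0(5) C(5) K_def T_def by simp
qed

lemma sum_app: "(\<Sum>x\<in>A. g x) m = (\<Sum>x\<in>A. g x m :: 'b::comm_monoid_add)"
proof (induction A rule: infinite_finite_induct)
  case (insert x F)
  have e: "(\<Sum>y\<in>insert x F. g y) = g x + (\<Sum>y\<in>F. g y)" using insert(1,2) by (rule sum.insert)
  show ?case unfolding e plus_fun_apply insert(3) using insert(1,2) by simp
qed simp_all

definition delta :: "expo \<Rightarrow> expo \<Rightarrow> 'a::{zero,one}" where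
  "delta m = (\<lambda>m'. if m' = m then 1 else 0)"

lemma hom_span_delta: "hom_forms t \<subseteq> vs.span (delta ` mons t :: (expo \<Rightarrow> 'a::field) set)"
proof
  fix f :: "expo \<Rightarrow> 'a" assume f: "f \<in> hom_forms t"
  have "f = (\<Sum>m\<in>mons t. scalef (f m) (delta m))"
  proof (rule ext)
    fix m'
    have "(\<Sum>m\<in>mons t. scalef (f m) (delta m)) m' = (\<Sum>m\<in>mons t. if m = m' then f m' else 0)"
      unfolding sum_app
      by (rule sum.cong) (auto simp: delta_def)
    also have "\<dots> = f m'" using finite_mons hom_formsD[OF f, of m'] by (auto simp: sum.delta mons_def)
    finally show "f m' = (\<Sum>m\<in>mons t. scalef (f m) (delta m)) m'" by simp
  qed
  also have "\<dots> \<in> vs.span (delta ` mons t)"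
    by (intro vs.span_sum vs.span_scale vs.span_base) auto
  finally show "f \<in> vs.span (delta ` mons t)" .
qed

lemma hom_fdim: "fdim (hom_forms t :: (expo \<Rightarrow> 'a::field) set)"
  unfolding fdim_def using hom_span_delta finite_mons by blast

lemma delta_indep: "vs.independent (delta ` mons t :: (expo \<Rightarrow> 'a::field) set)"
  unfolding vs.independent_explicit_module
proof (intro allI impI)
  fix T u v assume h: "finite T" "T \<subseteq> delta ` mons t" "(\<Sum>v\<in>T. scalef (u v) v) = (0::expo \<Rightarrow> 'a)" "v \<in> T"
  obtain m where m: "v = delta m" using h by blast
  have "0 = (\<Sum>w\<in>T. scalef (u w) w) m" using h(3) by simp
  also have "\<dots> = (\<Sum>w\<in>T. if w = v then u v else 0)"
    unfolding sum_app
  proof (rule sum.cong[OF refl])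
    fix w assume "w \<in> T"
    then obtain m' where m': "w = delta m'" using h(2) by blast
    show "scalef (u w) w m = (if w = v then u v else 0)"
    proof (cases "m' = m")
      case True thus ?thesis by (simp add: m m' delta_def)
    next
      case False
      have "w m \<noteq> v m" using False by (simp add: m m' delta_def)
      hence "w \<noteq> v" by metis
      thus ?thesis using False by (simp add: m' delta_def)
    qed
  qed
  also have "\<dots> = u v" using h(1,4) by simp
  finally show "u v = 0" by simp
qed

lemma inj_delta: "inj (delta :: expo \<Rightarrow> expo \<Rightarrow> 'a::zero_neq_one)"
  by (rule injI) (metis delta_def zero_neq_one)

lemma dim_hom: "vs.dim (hom_forms t :: (expo \<Rightarrow> 'a::field) set) = card (mons t)"
proof -
  have "delta ` mons t \<subseteq> (hom_forms t :: (expo \<Rightarrow> 'a) set)"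
    by (auto simp: hom_forms_def delta_def mons_def split: if_splits)
  hence "vs.dim (hom_forms t :: (expo \<Rightarrow> 'a) set) = card (delta ` mons t :: (expo \<Rightarrow> 'a) set)"
    using hom_span_delta delta_indep by (metis vs.basis_card_eq_dim)
  also have "\<dots> = card (mons t)" by (rule card_image[OF inj_on_subset[OF inj_delta]]) simp
  finally show ?thesis .
qed

fun sa :: "expo \<Rightarrow> expo" where "sa (a,b,c) = (Suc a, b, c)"

lemma mons_Suc: "mons (Suc t) = sa ` mons t \<union> (\<lambda>b. (0, b, Suc t - b)) ` {..Suc t}"
proof (rule set_eqI, clarify)
  fix a b c
  show "((a,b,c) \<in> mons (Suc t)) = ((a,b,c) \<in> sa ` mons t \<union> (\<lambda>b. (0, b, Suc t - b)) ` {..Suc t})"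
  proof (cases a)
    case 0 thus ?thesis by (auto simp: mons_def image_iff)
  next
    case (Suc a') thus ?thesis by (auto simp: mons_def image_iff)
  qed
qed

lemma card_mons: "2 * card (mons t) = (t + 1) * (t + 2)"
proof (induction t)
  case 0
  have "mons 0 = {(0,0,0)}" by (auto simp: mons_def)
  thus ?case by simp
next
  case (Suc t)
  have d: "sa ` mons t \<inter> (\<lambda>b. (0, b, Suc t - b)) ` {..Suc t} = {}"
    by auto
  have i1: "inj_on sa (mons t)" unfolding inj_on_def by (metis sa.elims prod.inject nat.inject sa.simps)
  have i2: "inj_on (\<lambda>b. (0::nat, b, Suc t - b)) {..Suc t}" by (auto simp: inj_on_def)
  have "card (mons (Suc t)) = card (mons t) + (t + 2)"
    unfolding mons_Suc
    by (subst card_Un_disjoint) (auto simp: d finite_mons card_image[OF i1] card_image[OF i2])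
  thus ?case using Suc by simp
qed


section \<open>Polynomial facts\<close>

lemma double_root:
  fixes p :: "'a::field poly"
  assumes "poly p x = 0" "poly (pderiv p) x = 0"
  shows "[:-x,1:]^2 dvd p"
proof -
  obtain q where q: "p = [:-x,1:] * q" using assms(1) poly_eq_0_iff_dvd by blast
  have d1: "pderiv [:-x,1:] = 1" by (simp add: pderiv_pCons)
  have "pderiv p = [:-x,1:] * pderiv q + q * pderiv [:-x,1:]" unfolding q by (rule pderiv_mult)
  hence "poly (pderiv p) x = poly q x" by (simp add: d1)
  hence "poly q x = 0" using assms(2) by simp
  then obtain r where r: "q = [:-x,1:] * r" using poly_eq_0_iff_dvd by blast
  have "p = [:-x,1:]^2 * r" unfolding q r by (simp only: power2_eq_square mult.assoc)
  thus ?thesis by (rule dvdI)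
qed

lemma roots_dvd:
  fixes p :: "'a::field poly"
  assumes "finite S" "\<And>x. x \<in> S \<Longrightarrow> [:-x,1:]^k dvd p"
  shows "(\<Prod>x\<in>S. [:-x,1:]^k) dvd p"
  using assms
proof (induction S rule: finite_induct)
  case empty thus ?case by simp
next
  case (insert y S)
  have "(\<Prod>x\<in>S. [:-x,1:]^k) dvd p" using insert by blast
  then obtain q where q: "p = (\<Prod>x\<in>S. [:-x,1:]^k) * q" by blast
  have yk: "[:-y,1:]^k dvd p" using insert by blast
  show ?case
  proof (cases "p = 0")
    case True thus ?thesis by simp
  next
    case False
    have nz: "(\<Prod>x\<in>S. [:-x,1:]^k) \<noteq> (0 :: 'a poly)" by (simp add: insert(1))
    have q0: "q \<noteq> 0" using False q by auto
    have "poly (\<Prod>x\<in>S. [:-x,1:]^k) y \<noteq> 0" using insert(2) by (simp add: poly_prod insert(1))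
    hence o0: "order y (\<Prod>x\<in>S. [:-x,1:]^k) = 0" by (rule order_0I)
    have "k \<le> order y p" using yk False order_divides by blast
    also have "order y p = order y q" unfolding q using nz q0 by (simp add: order_mult o0)
    finally have "[:-y,1:]^k dvd q" using order_divides by blast
    then obtain r where "q = [:-y,1:]^k * r" by blast
    hence "p = (\<Prod>x\<in>insert y S. [:-x,1:]^k) * r"
      using q insert(1,2) by (simp add: mult_ac)
    thus ?thesis by simp
  qed
qed

lemma degree_roots_prod:
  assumes "finite S"
  shows "degree (\<Prod>x\<in>S. [:-x,1:]^k :: 'a::field poly) = k * card S"
  by (subst degree_prod_sum_eq) (auto simp: degree_power_eq)

section \<open>Encoding polynomials as forms\<close>

definition enc :: "'a::zero poly \<Rightarrow> expo \<Rightarrow> 'a" where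
  "enc p m = (case m of (a,b,c) \<Rightarrow> if b = 0 \<and> c = 0 then coeff p a else 0)"

lemma enc_add: "enc (p + q) = enc p + enc q"
  by (rule ext) (simp add: enc_def split: prod.splits)

lemma enc_smult: "enc (smult c p) = scalef c (enc p)"
  by (rule ext) (simp add: enc_def split: prod.splits)

lemma enc_zero[simp]: "enc 0 = 0"
  by (rule ext) (simp add: enc_def split: prod.splits)

lemma enc_eq_0: "enc p = 0 \<Longrightarrow> p = 0"
proof (rule poly_eqI)
  fix n assume "enc p = 0"
  hence "enc p (n,0,0) = 0" by simp
  thus "coeff p n = coeff 0 n" by (simp add: enc_def)
qed

lemma enc_sum: "enc (\<Sum>x\<in>A. g x) = (\<Sum>x\<in>A. enc (g x))"
proof (induction A rule: infinite_finite_induct)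
  case (insert x F)
  thus ?case by (simp only: sum.insert[OF insert(1,2)] enc_add)
qed simp_all

definition trunc :: "nat \<Rightarrow> (expo \<Rightarrow> 'a::zero) \<Rightarrow> expo \<Rightarrow> 'a" where
  "trunc t f m = (if edeg m = t then f m else 0)"

lemma trunc_hom: "trunc t f \<in> hom_forms t"
  by (auto simp: trunc_def hom_forms_def)

lemma trunc_id: "f \<in> hom_forms t \<Longrightarrow> trunc t f = f"
  by (rule ext) (auto simp: trunc_def dest: hom_formsD)

definition rho :: "nat \<Rightarrow> 'a::field_char_0 \<times> 'a \<times> 'a \<Rightarrow> 'a \<times> 'a \<times> 'a \<Rightarrow> (expo \<Rightarrow> 'a) \<Rightarrow> expo \<Rightarrow> 'a" where
  "rho t A B f = enc (rest (trunc t f) A B)"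

lemma trunc_add: "trunc t (f + g) = trunc t f + trunc t (g :: expo \<Rightarrow> 'a::comm_monoid_add)"
  by (rule ext) (simp add: trunc_def)

lemma trunc_scalef: "trunc t (scalef c f) = scalef c (trunc t f)"
  by (rule ext) (simp add: trunc_def)

lemma lin_rho: "lin (rho t A B)"
  unfolding lin_def rho_def
  by (simp add: trunc_add trunc_scalef rest_add rest_scalef hom_fs[OF trunc_hom] enc_add enc_smult)

lemma rho_hom: "f \<in> hom_forms t \<Longrightarrow> rho t A B f = enc (rest f A B)"
  by (simp add: rho_def trunc_id)

lemma rho_span_bound:
  fixes D :: "'a::field_char_0 poly"
  assumes "\<And>f. f \<in> S \<Longrightarrow> S \<subseteq> hom_forms t \<and> (\<exists>q. rest f A B = D * q \<and> degree q \<le> s)"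
  shows "vs.dim (rho t A B ` S) \<le> Suc s"
proof -
  have "rho t A B ` S \<subseteq> vs.span ((\<lambda>i. enc (D * monom 1 i)) ` {..s})"
  proof
    fix y assume "y \<in> rho t A B ` S"
    then obtain f where f: "f \<in> S" "y = rho t A B f" by blast
    obtain q where q: "rest f A B = D * q" "degree q \<le> s" using assms f(1) by blast
    have fh: "f \<in> hom_forms t" using assms f(1) by blast
    have "y = enc (D * q)" using f(2) q(1) fh by (simp add: rho_hom)
    also have "D * q = (\<Sum>i\<le>s. smult (coeff q i) (D * monom 1 i))"
    proof -
      have "D * q = (\<Sum>i\<le>s. D * monom (coeff q i) i)"
        by (subst (1) poly_as_sum_of_monoms'[OF q(2), symmetric]) (simp add: sum_distrib_left)
      also have "\<dots> = (\<Sum>i\<le>s. smult (coeff q i) (D * monom 1 i))"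
        by (rule sum.cong[OF refl]) (simp add: mult_smult_right[symmetric] smult_monom)
      finally show ?thesis .
    qed
    also have "enc \<dots> = (\<Sum>i\<le>s. scalef (coeff q i) (enc (D * monom 1 i)))"
      by (simp add: enc_sum enc_smult)
    also have "\<dots> \<in> vs.span ((\<lambda>i. enc (D * monom 1 i)) ` {..s})"
      by (intro vs.span_sum vs.span_scale vs.span_base) auto
    finally show "y \<in> vs.span ((\<lambda>i. enc (D * monom 1 i)) ` {..s})" .
  qed
  hence "vs.dim (rho t A B ` S) \<le> card ((\<lambda>i. enc (D * monom 1 i)) ` {..s})"
    by (intro vs.dim_le_card) auto
  also have "\<dots> \<le> card {..s}" by (rule card_image_le) simp
  finally show ?thesis by simp
qed


lemma le_padd1: "lin_eval (padd a b) e = lin_eval a e + lin_eval b (e :: 'a::field \<times> 'a \<times> 'a)"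
  by (cases a; cases b; cases e) (simp add: algebra_simps)

lemma le_psc1: "lin_eval (psc c a) e = c * lin_eval a (e :: 'a::field \<times> 'a \<times> 'a)"
  by (cases a; cases e) (simp add: algebra_simps)

lemma line_frame:
  fixes L :: "'a::field_char_0 \<times> 'a \<times> 'a"
  assumes L: "nonzero3 L" and X: "finite X" and XP: "\<And>P. P \<in> X \<Longrightarrow> nonzero3 P \<and> lin_eval L P = 0"
  shows "\<exists>lam E. frame lam E \<and> lam 0 = L \<and> (\<forall>P\<in>X. lin_eval (lam 1) P \<noteq> 0)"
proof -
  obtain lam E where fr: "frame lam E" and l0: "lam 0 = L" using frame_line_exists[OF L] by blast
  have nz: "lin_eval (lam 1) P \<noteq> 0 \<or> lin_eval (lam 2) P \<noteq> 0" if "P \<in> X" for P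
  proof (rule ccontr)
    assume neg: "\<not> (lin_eval (lam 1) P \<noteq> 0 \<or> lin_eval (lam 2) P \<noteq> 0)"
    have "P = padd (psc (lin_eval (lam 0) P) (E 0)) (padd (psc (lin_eval (lam 1) P) (E 1)) (psc (lin_eval (lam 2) P) (E 2)))"
      using frame_point[OF fr] by blast
    also have "\<dots> = (0,0,0)" using neg XP[OF that] l0
      by (cases "E 0"; cases "E 1"; cases "E 2") simp
    finally show False using XP[OF that] by (simp add: nonzero3_def)
  qed
  let ?B = "(\<lambda>P. lin_eval (lam 1) P / lin_eval (lam 2) P) ` X"
  have "finite ?B" using X by simp
  then obtain c where c: "c \<notin> ?B" using ex_new_if_finite[OF infinite_UNIV_char_0] by blast
  let ?lam = "tri3 (lam 0) (padd (lam (Suc 0)) (psc (-c) (lam (Suc (Suc 0))))) (lam (Suc (Suc 0)))"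
  let ?E = "tri3 (E 0) (E (Suc 0)) (padd (E (Suc (Suc 0))) (psc c (E (Suc 0))))"
  have "frame ?lam ?E" by (rule frame_shear[OF fr])
  moreover have "?lam 0 = L" using l0 by simp
  moreover have "\<forall>P\<in>X. lin_eval (?lam 1) P \<noteq> 0"
  proof
    fix P assume P: "P \<in> X"
    show "lin_eval (?lam 1) P \<noteq> 0"
    proof (cases "lin_eval (lam 2) P = 0")
      case True thus ?thesis using nz[OF P] by (simp add: le_padd1 le_psc1 numeral_2_eq_2)
    next
      case False
      have "c \<noteq> lin_eval (lam 1) P / lin_eval (lam 2) P" using c P by blast
      hence "lin_eval (lam 1) P - c * lin_eval (lam 2) P \<noteq> 0" using False by (auto simp: field_simps)
      thus ?thesis by (simp add: le_padd1 le_psc1 numeral_2_eq_2)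
    qed
  qed
  ultimately show ?thesis by blast
qed

lemma on_line_param:
  assumes fr: "frame lam E" and l0: "lin_eval (lam 0) P = 0" and a: "lin_eval (lam 1) P \<noteq> 0"
  shows "P = psc (lin_eval (lam 1) P) (lp (E 1) (E 2) (lin_eval (lam 2) P / lin_eval (lam 1) P))"
proof -
  have "P = padd (psc (lin_eval (lam 0) P) (E 0)) (padd (psc (lin_eval (lam 1) P) (E 1)) (psc (lin_eval (lam 2) P) (E 2)))"
    using frame_point[OF fr] by blast
  also have "\<dots> = psc (lin_eval (lam 1) P) (lp (E 1) (E 2) (lin_eval (lam 2) P / lin_eval (lam 1) P))"
    using a l0 by (cases "E 0"; cases "E 1"; cases "E 2") (simp add: lp_def field_simps)
  finally show ?thesis .
qed

lemma ev_line: "f \<in> hom_forms t \<Longrightarrow> P = psc a (lp A B x) \<Longrightarrow> ev f P = a ^ t * poly (rest f A B) x"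
  by (simp add: ev_psc poly_rest)

lemma coeff1_pderiv: "coeff p (Suc 0) = poly (pderiv p) 0"
  by (simp add: poly_0_coeff_0 coeff_pderiv)

lemma dv_line:
  fixes A B :: "'a::field_char_0 \<times> 'a \<times> 'a"
  assumes f: "f \<in> hom_forms t" and a: "a \<noteq> 0" and P: "P = psc a (lp A B x)" and d: "dv P f"
  shows "poly (rest f A B) x = 0 \<and> poly (pderiv (rest f A B)) x = 0"
proof
  have "ev f P = 0" using d unfolding dv_def by (metis coeff0_rest)
  thus "poly (rest f A B) x = 0" using ev_line[OF f P] a by simp
  have e: "rest f P B = smult (a ^ t) (pcompose (rest f A B) [:x, 1/a:])"
  proof (rule rest_eqI)
    fix y
    have "lp P B y = psc a (lp A B (x + y / a))"
      using a by (cases A; cases B) (simp add: P lp_def field_simps)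
    thus "poly (rest f P B) y = poly (smult (a ^ t) (pcompose (rest f A B) [:x, 1/a:])) y"
      by (simp add: poly_rest ev_psc[OF f] poly_pcompose field_simps)
  qed
  have h: "coeff (rest f P v) 1 = 0" for v using d unfolding dv_def by blast
  have "0 = coeff (rest f P B) (Suc 0)" using h[of B] by simp
  also have "\<dots> = a ^ t * poly (pderiv (rest f A B)) x * (1 / a)"
    unfolding coeff1_pderiv e by (simp add: pderiv_smult pderiv_pcompose poly_pcompose pderiv_pCons)
  finally show "poly (pderiv (rest f A B)) x = 0" using a by simp
qed

lemma proportional_psc: "c \<noteq> 0 \<Longrightarrow> proportional p (psc c p)"
  by (cases p) (auto simp: proportional_def)

locale line_setup =
  fixes lam E :: "nat \<Rightarrow> 'a::field_char_0 \<times> 'a \<times> 'a" and X :: "('a \<times> 'a \<times> 'a) set"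
  assumes fr: "frame lam E" and finX: "finite X"
    and onL: "\<And>P. P \<in> X \<Longrightarrow> lin_eval (lam 0) P = 0"
    and a1: "\<And>P. P \<in> X \<Longrightarrow> lin_eval (lam 1) P \<noteq> 0"
    and np: "\<And>P Q. P \<in> X \<Longrightarrow> Q \<in> X \<Longrightarrow> P \<noteq> Q \<Longrightarrow> \<not> proportional P Q"
begin

definition xP where "xP P = lin_eval (lam 2) P / lin_eval (lam 1) P"

lemma param: "P \<in> X \<Longrightarrow> P = psc (lin_eval (lam 1) P) (lp (E 1) (E 2) (xP P))"
  unfolding xP_def using on_line_param[OF fr onL a1] .

lemma inj_xP: "inj_on xP X"
proof (rule inj_onI, rule ccontr)
  fix P Q assume P: "P \<in> X" and Q: "Q \<in> X" and e: "xP P = xP Q" and ne: "P \<noteq> Q"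
  let ?a = "lin_eval (lam 1) P" and ?b = "lin_eval (lam 1) Q"
  have "Q = psc ?b (lp (E 1) (E 2) (xP P))" using param[OF Q] e by simp
  also have "\<dots> = psc (?b / ?a) P"
    using param[OF P] a1[OF P]
    by (cases "lp (E 1) (E 2) (xP P)") (metis (no_types, lifting) divide_eq_eq mult.assoc psc.simps)
  finally have "proportional P Q" using a1[OF Q] a1[OF P] by (metis proportional_psc divide_eq_0_iff)
  thus False using np[OF P Q ne] by blast
qed

lemma card_xP: "card (xP ` X) = card X"
  using card_image[OF inj_xP] .

lemma line_vanish:
  assumes f: "f \<in> hom_forms t" and d: "\<And>P. P \<in> X \<Longrightarrow> dv P f" and tl: "t < 2 * card X"
  shows "\<exists>g \<in> hom_forms (t - 1). f = pmul (linform (lam 0)) g"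
proof -
  let ?p = "rest f (E 1) (E 2)"
  have "[:-x,1:]^2 dvd ?p" if x: "x \<in> xP ` X" for x
  proof -
    obtain P where P: "P \<in> X" "x = xP P" using x by blast
    show ?thesis using dv_line[OF f a1[OF P(1)] param[OF P(1)] d[OF P(1)]] P(2) by (intro double_root) auto
  qed
  hence dvd: "(\<Prod>x\<in>xP ` X. [:-x,1:]^2) dvd ?p" using finX by (intro roots_dvd) auto
  have "?p = 0"
  proof (rule ccontr)
    assume "?p \<noteq> 0"
    hence "degree (\<Prod>x\<in>xP ` X. [:-x,1:]^2) \<le> degree ?p"
      using dvd by (intro dvd_imp_degree) auto
    hence "2 * card X \<le> t" using degree_rest[OF f, of "E 1" "E 2"] finX
      by (simp add: degree_roots_prod card_xP)
    thus False using tl by simp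
  qed
  thus ?thesis by (rule line_div[OF fr f])
qed

lemma line_simple:
  assumes f: "f \<in> hom_forms t" and z: "\<And>P. P \<in> X \<Longrightarrow> ev f P = 0"
  shows "\<exists>q. rest f (E 1) (E 2) = (\<Prod>x\<in>xP ` X. [:-x,1:]^1) * q \<and> degree q \<le> t - card X"
proof -
  let ?p = "rest f (E 1) (E 2)" and ?D = "(\<Prod>x\<in>xP ` X. [:-x,1:]^1)"
  have "[:-x,1:]^1 dvd ?p" if x: "x \<in> xP ` X" for x
  proof -
    obtain P where P: "P \<in> X" "x = xP P" using x by blast
    have "poly ?p x = 0" using ev_line[OF f param[OF P(1)]] z[OF P(1)] a1[OF P(1)] P(2) by simp
    thus ?thesis by (simp add: poly_eq_0_iff_dvd)
  qed
  hence "?D dvd ?p" using finX by (intro roots_dvd) auto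
  then obtain q where q: "?p = ?D * q" by blast
  show ?thesis
  proof (cases "q = 0")
    case True thus ?thesis using q by auto
  next
    case False
    have D0: "?D \<noteq> 0" using finX by simp
    have dD: "degree ?D = card X" using degree_roots_prod[of "xP ` X" 1] finX card_xP by simp
    have "degree ?p = card X + degree q"
      using q False D0 dD by (simp add: degree_mult_eq)
    thus ?thesis using degree_rest[OF f, of "E 1" "E 2"] q by auto
  qed
qed

end


declare scalef_apply[simp del]

definition II :: "('a::field_char_0 \<times> 'a \<times> 'a) set \<Rightarrow> nat \<Rightarrow> (expo \<Rightarrow> 'a) set" where
  "II Y t = {f \<in> hom_forms t. \<forall>P\<in>Y. dv P f}"

lemma II_sub: "II Y t \<subseteq> hom_forms t"
  by (auto simp: II_def)

lemma fdim_II: "fdim (II Y t)"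
  by (rule fdim_subset[OF II_sub hom_fdim])

lemma subspace_II: "vs.subspace (II Y t)"
  unfolding vs.subspace_def
proof (intro conjI ballI allI)
  show "0 \<in> II Y t" using vs.subspace_0[OF subspace_hom] dv_zero by (auto simp: II_def)
  fix x y assume x: "x \<in> II Y t" and y: "y \<in> II Y t"
  have hx: "x \<in> hom_forms t" "\<forall>P\<in>Y. dv P x" using x by (simp_all add: II_def)
  have hy: "y \<in> hom_forms t" "\<forall>P\<in>Y. dv P y" using y by (simp_all add: II_def)
  show "x + y \<in> II Y t" unfolding II_def
    using vs.subspace_add[OF subspace_hom hx(1) hy(1)] dv_add[OF hom_fs[OF hx(1)] hom_fs[OF hy(1)]] hx(2) hy(2)
    by blast
next
  fix c x assume x: "x \<in> II Y t"
  have hx: "x \<in> hom_forms t" "\<forall>P\<in>Y. dv P x" using x by (simp_all add: II_def)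
  show "scalef c x \<in> II Y t" unfolding II_def
    using vs.subspace_scale[OF subspace_hom hx(1)] dv_scalef[OF hom_fs[OF hx(1)]] hx(2) by blast
qed

lemma II_empty: "II {} t = hom_forms t"
  by (simp add: II_def)

lemma lin_pmul: "lin (pmul f)"
  by (simp add: lin_def pmul_add_right pmul_scalef_right)

lemma dim_pmul_image: "S \<subseteq> hom_forms t \<Longrightarrow> vs.dim (pmul f ` S) \<le> vs.dim S"
  by (rule dim_image_le2[OF lin_pmul fdim_subset[OF _ hom_fdim]])

lemma fdim_pmul_image: "S \<subseteq> hom_forms t \<Longrightarrow> fdim (pmul f ` S)"
  by (rule fdim_image[OF lin_pmul fdim_subset[OF _ hom_fdim]])

section \<open>Upper bound on the Hilbert function\<close>

lemma coeffs_lin: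
  fixes P v :: "'a::field_char_0 \<times> 'a \<times> 'a"
  shows "coeff (rest (trunc t (f + g)) P v) k = coeff (rest (trunc t f) P v) k + coeff (rest (trunc t g) P v) k"
    "coeff (rest (trunc t (scalef c f)) P v) k = c * coeff (rest (trunc t f) P v) k"
  by (simp_all add: trunc_add trunc_scalef rest_add rest_scalef hom_fs[OF trunc_hom])

lemma U_step:
  fixes P :: "'a::field_char_0 \<times> 'a \<times> 'a"
  assumes P: "nonzero3 P"
  shows "vs.dim (II Y t) \<le> vs.dim (II (insert P Y) t) + 3"
proof -
  obtain lam E where fr: "frame lam E" and E0: "E 0 = P"
    using frame_point_exists[OF P] by blast
  define c0 where "c0 f = coeff (rest (trunc t f) P (E 1)) 0" for f
  define c1 where "c1 f = coeff (rest (trunc t f) P (E 1)) 1" for f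
  define c2 where "c2 f = coeff (rest (trunc t f) P (E 2)) 1" for f
  define psi where "psi f = enc (monom (c0 f) 0 + monom (c1 f) 1 + monom (c2 f) 2)" for f
  have lpsi: "lin psi"
    unfolding lin_def psi_def c0_def c1_def c2_def
    by (simp add: coeffs_lin enc_add enc_smult add_monom[symmetric] smult_monom[symmetric] algebra_simps
        del: add_monom smult_monom)
  have img: "psi ` II Y t \<subseteq> vs.span {enc (monom 1 0), enc (monom 1 1), enc (monom 1 2)}"
  proof
    fix y assume "y \<in> psi ` II Y t"
    then obtain f where y: "y = psi f" by blast
    have "y = scalef (c0 f) (enc (monom 1 0)) + scalef (c1 f) (enc (monom 1 1)) + scalef (c2 f) (enc (monom 1 2))"
      unfolding y psi_def by (simp add: enc_add enc_smult[symmetric] smult_monom monom_0)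
    thus "y \<in> vs.span {enc (monom 1 0), enc (monom 1 1), enc (monom 1 2)}"
      by (simp add: vs.span_add vs.span_scale vs.span_base)
  qed
  have dimg: "vs.dim (psi ` II Y t) \<le> 3"
  proof -
    have "vs.dim (psi ` II Y t) \<le> card {enc (monom 1 0), enc (monom 1 1), enc (monom (1::'a) 2)}"
      by (rule vs.dim_le_card[OF img]) simp
    also have "\<dots> \<le> 3" by (rule order.trans[OF card_insert_le_m1]) (auto simp: card_insert_le_m1 intro: order.trans[OF card_insert_le])
    finally show ?thesis .
  qed
  have ker: "II Y t \<inter> {x. psi x = 0} \<subseteq> II (insert P Y) t"
  proof
    fix f assume f: "f \<in> II Y t \<inter> {x. psi x = 0}"
    have fh: "f \<in> hom_forms t" using f II_sub by blast
    have "monom (c0 f) 0 + monom (c1 f) 1 + monom (c2 f) 2 = 0"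
      using f enc_eq_0 unfolding psi_def by blast
    hence z: "c0 f = 0" "c1 f = 0" "c2 f = 0"
      by (metis coeff_add coeff_monom coeff_0 add.right_neutral add.left_neutral zero_neq_one
           one_neq_zero numeral_One numeral_eq_iff semiring_norm(85) nat.simps(3) Suc_1 n_not_Suc_n)+
    have "f \<in> sq_point_ideal_deg P t"
      by (rule psi_zero[OF fr E0 fh]) (use z in \<open>simp_all add: c0_def c1_def c2_def trunc_id[OF fh]\<close>)
    hence "dv P f" using sq_hom_dv by blast
    thus "f \<in> II (insert P Y) t" using f by (auto simp: II_def)
  qed
  have a: "vs.dim (II Y t) \<le> vs.dim (II Y t \<inter> {x. psi x = 0}) + vs.dim (psi ` II Y t)"
    by (rule rank_nullity_le[OF lpsi fdim_II subspace_II])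
  have b: "vs.dim (II Y t \<inter> {x. psi x = 0}) \<le> vs.dim (II (insert P Y) t)"
    by (rule dim_mono2[OF ker fdim_II])
  show ?thesis using a b dimg by linarith
qed

lemma U_bound:
  fixes Y :: "('a::field_char_0 \<times> 'a \<times> 'a) set"
  assumes "finite Y" "\<And>P. P \<in> Y \<Longrightarrow> nonzero3 P"
  shows "vs.dim (hom_forms t :: (expo \<Rightarrow> 'a) set) \<le> vs.dim (II Y t) + 3 * card Y"
  using assms
proof (induction Y rule: finite_induct)
  case empty thus ?case by (simp add: II_empty)
next
  case (insert P Y)
  have c: "card (insert P Y) = Suc (card Y)" using insert by simp
  have a: "vs.dim (hom_forms t :: (expo \<Rightarrow> 'a) set) \<le> vs.dim (II Y t) + 3 * card Y" using insert by blast
  have b: "vs.dim (II Y t) \<le> vs.dim (II (insert P Y) t) + 3" by (rule U_step) (use insert in blast)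
  have e: "3 * Suc (card Y) = 3 + 3 * card Y" by simp
  show ?case unfolding c e using a b by linarith
qed

section \<open>The general line bound\<close>

lemma M_core:
  fixes lam :: "nat \<Rightarrow> 'a::field_char_0 \<times> 'a \<times> 'a"
  assumes fr: "frame lam E" and avoid: "\<And>P. P \<in> Y \<Longrightarrow> lin_eval (lam 0) P \<noteq> 0"
    and img: "\<And>f. f \<in> II Y (Suc t) \<Longrightarrow> \<exists>q. rest f (E 1) (E 2) = D * q \<and> degree q \<le> s"
  shows "vs.dim (II Y (Suc t)) \<le> vs.dim (II Y t) + Suc s"
proof -
  let ?phi = "rho (Suc t) (E 1) (E 2)"
  have ker: "II Y (Suc t) \<inter> {x. ?phi x = 0} \<subseteq> pmul (linform (lam 0)) ` II Y t"
  proof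
    fix f assume f: "f \<in> II Y (Suc t) \<inter> {x. ?phi x = 0}"
    have fh: "f \<in> hom_forms (Suc t)" using f II_sub by blast
    have "rest f (E 1) (E 2) = 0" using f by (intro enc_eq_0) (simp add: rho_hom[OF fh])
    then obtain g where g: "g \<in> hom_forms t" "f = pmul (linform (lam 0)) g"
      using line_div[OF fr fh] by auto
    have "dv P g" if "P \<in> Y" for P
    proof (rule dv_cancel[OF fs_linform hom_fs[OF g(1)]])
      show "ev (linform (lam 0)) P \<noteq> 0" using avoid[OF that] by (simp add: ev_linform)
      show "dv P (pmul (linform (lam 0)) g)" using f that g(2) by (auto simp: II_def)
    qed
    hence "g \<in> II Y t" using g(1) by (auto simp: II_def)
    thus "f \<in> pmul (linform (lam 0)) ` II Y t" using g(2) by blast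
  qed
  have a: "vs.dim (II Y (Suc t)) \<le> vs.dim (II Y (Suc t) \<inter> {x. ?phi x = 0}) + vs.dim (?phi ` II Y (Suc t))"
    by (rule rank_nullity_le[OF lin_rho fdim_II subspace_II])
  have b: "vs.dim (II Y (Suc t) \<inter> {x. ?phi x = 0}) \<le> vs.dim (pmul (linform (lam 0)) ` II Y t)"
    by (rule dim_mono2[OF ker fdim_pmul_image[OF II_sub]])
  have c: "vs.dim (pmul (linform (lam 0)) ` II Y t) \<le> vs.dim (II Y t)" by (rule dim_pmul_image[OF II_sub])
  have d: "vs.dim (?phi ` II Y (Suc t)) \<le> Suc s"
    by (rule rho_span_bound) (use img II_sub in blast)
  show ?thesis using a b c d by linarith
qed

lemma exists_M:
  fixes Y :: "('a::field_char_0 \<times> 'a \<times> 'a) set"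
  assumes "finite Y" "\<And>P. P \<in> Y \<Longrightarrow> nonzero3 P"
  shows "\<exists>M. nonzero3 M \<and> (\<forall>P\<in>Y. lin_eval M P \<noteq> 0)"
proof -
  define pp where "pp P = [:fst P, fst (snd P), snd (snd P):]" for P :: "'a \<times> 'a \<times> 'a"
  have nz: "pp P \<noteq> 0" if "P \<in> Y" for P
    using assms(2)[OF that] by (cases P) (auto simp: pp_def nonzero3_def)
  have "finite (\<Union>P\<in>Y. {x. poly (pp P) x = 0})"
    using assms(1) nz poly_roots_finite by blast
  then obtain c where c: "c \<notin> (\<Union>P\<in>Y. {x. poly (pp P) x = 0})"
    using ex_new_if_finite[OF infinite_UNIV_char_0] by blast
  have "lin_eval (1, c, c^2) P \<noteq> 0" if "P \<in> Y" for P
    using c that by (cases P) (auto simp: pp_def algebra_simps power2_eq_square)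
  moreover have "nonzero3 (1::'a, c, c^2)" by (simp add: nonzero3_def)
  ultimately show ?thesis by blast
qed

lemma M_bound:
  fixes Y :: "('a::field_char_0 \<times> 'a \<times> 'a) set"
  assumes "finite Y" "\<And>P. P \<in> Y \<Longrightarrow> nonzero3 P"
  shows "vs.dim (II Y (Suc t)) \<le> vs.dim (II Y t) + (t + 2)"
proof -
  obtain M where M: "nonzero3 M" "\<forall>P\<in>Y. lin_eval M P \<noteq> 0" using exists_M[OF assms] by blast
  obtain lam E where fr: "frame lam E" and l0: "lam 0 = M" using frame_line_exists[OF M(1)] by blast
  have "vs.dim (II Y (Suc t)) \<le> vs.dim (II Y t) + Suc (Suc t)"
  proof (rule M_core[OF fr, where D = 1])
    show "lin_eval (lam 0) P \<noteq> 0" if "P \<in> Y" for P using M(2) that l0 by blast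
    show "\<exists>q. rest f (E 1) (E 2) = 1 * q \<and> degree q \<le> Suc t" if fI: "f \<in> II Y (Suc t)" for f
    proof -
      have fh: "f \<in> hom_forms (Suc t)" using fI II_sub by blast
      show ?thesis using degree_rest[OF fh, of "E 1" "E 2"] by auto
    qed
  qed
  thus ?thesis by simp
qed

lemma M_bound_strong:
  fixes Y :: "('a::field_char_0 \<times> 'a \<times> 'a) set"
  assumes "finite Y" "\<And>P. P \<in> Y \<Longrightarrow> nonzero3 P"
    and sub: "II Y (Suc t) \<subseteq> pmul (linform l) ` hom_forms t"
  shows "vs.dim (II Y (Suc t)) \<le> vs.dim (II Y t) + (t + 1)"
proof -
  obtain M where M: "nonzero3 M" "\<forall>P\<in>Y. lin_eval M P \<noteq> 0" using exists_M[OF assms(1,2)] by blast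
  obtain lam E where fr: "frame lam E" and l0: "lam 0 = M" using frame_line_exists[OF M(1)] by blast
  have "vs.dim (II Y (Suc t)) \<le> vs.dim (II Y t) + Suc t"
  proof (rule M_core[OF fr, where D = "rest (linform l) (E 1) (E 2)"])
    show "lin_eval (lam 0) P \<noteq> 0" if "P \<in> Y" for P using M(2) that l0 by blast
    show "\<exists>q. rest f (E 1) (E 2) = rest (linform l) (E 1) (E 2) * q \<and> degree q \<le> t" if fI: "f \<in> II Y (Suc t)" for f
    proof -
      obtain g where g: "g \<in> hom_forms t" "f = pmul (linform l) g" using sub fI by blast
      show ?thesis using g degree_rest[OF g(1), of "E 1" "E 2"]
        by (intro exI[of _ "rest g (E 1) (E 2)"]) (simp add: rest_pmul fs_linform hom_fs)
    qed
  qed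
  thus ?thesis by simp
qed


lemma dimR: "2 * vs.dim (hom_forms t :: (expo \<Rightarrow> 'a::field) set) = (t + 1) * (t + 2)"
  using card_mons[of t] dim_hom[where 'a='a, of t] by simp

lemma dimR_Suc: "vs.dim (hom_forms (Suc t) :: (expo \<Rightarrow> 'a::field) set) = vs.dim (hom_forms t :: (expo \<Rightarrow> 'a) set) + (t + 2)"
proof -
  have "2 * vs.dim (hom_forms (Suc t) :: (expo \<Rightarrow> 'a) set) = 2 * vs.dim (hom_forms t :: (expo \<Rightarrow> 'a) set) + 2 * (t + 2)"
    unfolding dimR by (simp add: algebra_simps)
  thus ?thesis by simp
qed

lemma span_empty_sub: "S \<subseteq> vs.span {} \<Longrightarrow> vs.dim (S :: (expo \<Rightarrow> 'a::field) set) = 0"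
  using vs.dim_le_card[of S "{}"] by simp

lemma II_low:
  fixes Y :: "('a::field_char_0 \<times> 'a \<times> 'a) set"
  assumes "P \<in> Y" "nonzero3 P" "t < 2"
  shows "vs.dim (II Y t) = 0"
proof (rule span_empty_sub)
  show "II Y t \<subseteq> vs.span {}"
  proof
    fix f assume f: "f \<in> II Y t"
    have "f \<in> hom_forms t" "dv P f" using f assms(1) by (auto simp: II_def)
    hence "f \<in> sq_point_ideal_deg P t" using dv_sq[OF assms(2)] by blast
    thus "f \<in> vs.span {}" using assms(3) by (simp add: sq_point_ideal_deg_def)
  qed
qed

context
  fixes r :: nat and n :: "nat \<Rightarrow> nat" and L :: "nat \<Rightarrow> 'a::field_char_0 \<times> 'a \<times> 'a"
    and X :: "nat \<Rightarrow> ('a \<times> 'a \<times> 'a) set"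
  assumes lc: "linear_configuration r n L X"
begin

lemma lc_r: "1 \<le> r" using lc by (simp add: linear_configuration_def)
lemma lc_n0: "0 < n 0" using lc by (simp add: linear_configuration_def)
lemma lc_inc: "Suc i < r \<Longrightarrow> n i < n (Suc i)" using lc by (simp add: linear_configuration_def)
lemma lc_L: "i < r \<Longrightarrow> nonzero3 (L i)" using lc by (simp add: linear_configuration_def)
lemma lc_fin: "i < r \<Longrightarrow> finite (X i)" using lc by (simp add: linear_configuration_def)
lemma lc_card: "i < r \<Longrightarrow> card (X i) = n i" using lc by (simp add: linear_configuration_def)
lemma lc_nz: "i < r \<Longrightarrow> P \<in> X i \<Longrightarrow> nonzero3 P" using lc by (simp add: linear_configuration_def)
lemma lc_on: "i < r \<Longrightarrow> P \<in> X i \<Longrightarrow> lin_eval (L i) P = 0"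
  using lc by (simp add: linear_configuration_def on_line_def)
lemma lc_np: "i < r \<Longrightarrow> P \<in> X i \<Longrightarrow> Q \<in> X i \<Longrightarrow> P \<noteq> Q \<Longrightarrow> \<not> proportional P Q"
  using lc by (simp add: linear_configuration_def)
lemma lc_off: "i < r \<Longrightarrow> j < r \<Longrightarrow> i \<noteq> j \<Longrightarrow> P \<in> X i \<Longrightarrow> lin_eval (L j) P \<noteq> 0"
  using lc by (simp add: linear_configuration_def on_line_def)

lemma lc_nge: "i < r \<Longrightarrow> Suc i \<le> n i"
proof (induction i)
  case 0 thus ?case using lc_n0 by simp
next
  case (Suc i) thus ?case using lc_inc[of i] by simp
qed

lemma lc_mono: "j < i \<Longrightarrow> i < r \<Longrightarrow> n j < n i"
proof (induction i)
  case 0 thus ?case by simp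
next
  case (Suc i)
  thus ?case using lc_inc[of i] by (cases "j = i") auto
qed

definition Yk :: "nat \<Rightarrow> ('a \<times> 'a \<times> 'a) set" where
  "Yk k = (\<Union>i<k. X i)"

lemma Yk_Suc: "Yk (Suc k) = Yk k \<union> X k"
  by (auto simp: Yk_def lessThan_Suc)

lemma Yk_fin: "k \<le> r \<Longrightarrow> finite (Yk k)"
  unfolding Yk_def using lc_fin by auto

lemma Yk_nz: "k \<le> r \<Longrightarrow> P \<in> Yk k \<Longrightarrow> nonzero3 P"
proof -
  assume "k \<le> r" "P \<in> Yk k"
  then obtain i where "i < k" "P \<in> X i" by (auto simp: Yk_def)
  thus ?thesis using lc_nz[of i P] \<open>k \<le> r\<close> by simp
qed

lemma Yk_card: "k < r \<Longrightarrow> card (Yk (Suc k)) = card (Yk k) + n k"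
proof -
  assume k: "k < r"
  have "Yk k \<inter> X k = {}"
  proof (rule ccontr)
    assume "Yk k \<inter> X k \<noteq> {}"
    then obtain P i where "i < k" "P \<in> X i" "P \<in> X k" by (auto simp: Yk_def)
    thus False using lc_off[of i k P] lc_on[of k P] k by simp
  qed
  thus ?thesis unfolding Yk_Suc using Yk_fin[of k] lc_fin[of k] lc_card[of k] k
    by (simp add: card_Un_disjoint)
qed

lemma Yk_off: "k < r \<Longrightarrow> P \<in> Yk k \<Longrightarrow> lin_eval (L k) P \<noteq> 0"
proof -
  assume "k < r" "P \<in> Yk k"
  then obtain i where "i < k" "P \<in> X i" by (auto simp: Yk_def)
  thus ?thesis using lc_off[of i k P] \<open>k < r\<close> by simp
qed

definition LB :: "nat \<Rightarrow> nat \<Rightarrow> bool" where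
  "LB k t \<longleftrightarrow> vs.dim (II (Yk k) t) + 3 * card (Yk k) \<le> vs.dim (hom_forms t :: (expo \<Rightarrow> 'a) set)"

lemma LB_mono: "k \<le> r \<Longrightarrow> LB k t \<Longrightarrow> LB k (Suc t)"
proof -
  assume k: "k \<le> r" and lb: "LB k t"
  have "finite (Yk k)" "\<And>P. P \<in> Yk k \<Longrightarrow> nonzero3 P" using Yk_fin[OF k] Yk_nz[OF k] by auto
  from M_bound[OF this, of t] show ?thesis using lb dimR_Suc[of t, where 'a='a] unfolding LB_def by linarith
qed

lemma line_of:
  assumes k: "k < r"
  obtains lam E where "line_setup lam E (X k)" "lam 0 = L k" "frame lam E"
proof -
  obtain lam E where fr: "frame lam E" and l0: "lam 0 = L k" and a1: "\<forall>P\<in>X k. lin_eval (lam 1) P \<noteq> 0"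
    using line_frame[OF lc_L[OF k] lc_fin[OF k]] lc_nz[OF k] lc_on[OF k] by blast
  have "line_setup lam E (X k)"
    by (unfold_locales) (use fr l0 a1 lc_fin[OF k] lc_on[OF k] lc_np[OF k] in auto)
  thus ?thesis using that l0 fr by blast
qed

lemma LB_step:
  assumes k: "k < r" and IH: "\<And>t. k = 0 \<or> 2 * n (k - 1) \<le> Suc t \<Longrightarrow> LB k t"
  shows "LB (Suc k) (2 * n k - 1)"
proof (cases "n k = 1")
  case True
  have k0: "k = 0" using lc_nge[OF k] True by simp
  have c: "card (X k) = 1" using lc_card[OF k] True by simp
  then obtain P where P: "P \<in> X k" by (metis card_1_singletonE insertI1)
  have Y: "Yk (Suc k) = X k" using k0 by (simp add: Yk_def lessThan_Suc)
  have "vs.dim (II (Yk (Suc k)) (2 * n k - 1)) = 0"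
    by (rule II_low[of P]) (use P Y lc_nz[OF k P] True in auto)
  moreover have "vs.dim (hom_forms 1 :: (expo \<Rightarrow> 'a) set) = 3" using dimR[of 1, where 'a='a] by simp
  ultimately show ?thesis unfolding LB_def using Y c True by simp
next
  case False
  have nk2: "2 \<le> n k" using False lc_nge[OF k] by linarith
  define d where "d = 2 * n k - 1"
  have d3: "3 \<le> d" using nk2 d_def by simp
  let ?Y' = "Yk k" and ?Y = "Yk (Suc k)"
  obtain lam E where ls: "line_setup lam E (X k)" and l0: "lam 0 = L k" and fr: "frame lam E"
    using line_of[OF k] by blast
  interpret ls: line_setup lam E "X k" by (rule ls)
  have E0: "lin_eval (L k) (E 0) = 1" using frame_ev[OF fr, of 0 0] l0 by simp
  define J where "J = {g \<in> hom_forms (d - 1). (\<forall>P\<in>?Y'. dv P g) \<and> (\<forall>P\<in>X k. ev g P = 0)}"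
  have J_sub: "J \<subseteq> hom_forms (d - 1)" by (auto simp: J_def)
  have J_subsp: "vs.subspace J"
    unfolding vs.subspace_def
  proof (intro conjI ballI allI)
    show "0 \<in> J" using vs.subspace_0[OF subspace_hom] dv_zero by (auto simp: J_def)
    fix x y assume x: "x \<in> J" and y: "y \<in> J"
    have hx: "x \<in> hom_forms (d-1)" "\<forall>P\<in>?Y'. dv P x" "\<forall>P\<in>X k. ev x P = 0" using x by (simp_all add: J_def)
    have hy: "y \<in> hom_forms (d-1)" "\<forall>P\<in>?Y'. dv P y" "\<forall>P\<in>X k. ev y P = 0" using y by (simp_all add: J_def)
    show "x + y \<in> J" unfolding J_def
      using vs.subspace_add[OF subspace_hom hx(1) hy(1)] dv_add[OF hom_fs[OF hx(1)] hom_fs[OF hy(1)]]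
        ev_add[OF hom_fs[OF hx(1)] hom_fs[OF hy(1)]] hx(2,3) hy(2,3) by simp
  next
    fix c x assume x: "x \<in> J"
    have hx: "x \<in> hom_forms (d-1)" "\<forall>P\<in>?Y'. dv P x" "\<forall>P\<in>X k. ev x P = 0" using x by (simp_all add: J_def)
    show "scalef c x \<in> J" unfolding J_def
      using vs.subspace_scale[OF subspace_hom hx(1)] dv_scalef[OF hom_fs[OF hx(1)]]
        ev_scalef[OF hom_fs[OF hx(1)]] hx(2,3) by simp
  qed
  have J_fd: "fdim J" by (rule fdim_subset[OF J_sub hom_fdim])
  have s1: "II ?Y d \<subseteq> pmul (linform (L k)) ` J"
  proof
    fix f assume f: "f \<in> II ?Y d"
    have fh: "f \<in> hom_forms d" and fdv: "\<And>P. P \<in> ?Y \<Longrightarrow> dv P f" using f by (auto simp: II_def)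
    obtain g where g: "g \<in> hom_forms (d - 1)" "f = pmul (linform (lam 0)) g"
      using ls.line_vanish[OF fh] fdv lc_card[OF k] d_def nk2 Yk_Suc by fastforce
    have "dv P g" if "P \<in> ?Y'" for P
    proof (rule dv_cancel[OF fs_linform hom_fs[OF g(1)]])
      show "ev (linform (lam 0)) P \<noteq> 0" using Yk_off[OF k that] l0 by (simp add: ev_linform)
      show "dv P (pmul (linform (lam 0)) g)" using fdv[of P] that g(2) Yk_Suc by auto
    qed
    moreover have "ev g P = 0" if "P \<in> X k" for P
    proof (rule dv_lin_zero[OF hom_fs[OF g(1)]])
      show "lin_eval (L k) P = 0" by (rule lc_on[OF k that])
      show "lin_eval (L k) (E 0) \<noteq> 0" using E0 by simp
      show "dv P (pmul (linform (L k)) g)" using fdv[of P] that g(2) Yk_Suc l0 by auto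
    qed
    ultimately have gJ: "g \<in> J" using g(1) by (auto simp: J_def)
    have "f = pmul (linform (L k)) g" using g(2) l0 by simp
    thus "f \<in> pmul (linform (L k)) ` J" using gJ by (rule image_eqI)
  qed
  have a: "vs.dim (II ?Y d) \<le> vs.dim J"
    using dim_mono2[OF s1 fdim_pmul_image[OF J_sub]] dim_pmul_image[OF J_sub, of "linform (L k)"] by linarith
  let ?phi = "rho (d - 1) (E 1) (E 2)"
  have ker: "J \<inter> {x. ?phi x = 0} \<subseteq> pmul (linform (lam 0)) ` II ?Y' (d - 1 - 1)"
  proof
    fix g assume g: "g \<in> J \<inter> {x. ?phi x = 0}"
    have gh: "g \<in> hom_forms (d - 1)" using g J_sub by blast
    have "rest g (E 1) (E 2) = 0" using g rho_hom[OF gh, of "E 1" "E 2"] by (intro enc_eq_0) simp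
    then obtain h where h: "h \<in> hom_forms (d - 1 - 1)" "g = pmul (linform (lam 0)) h"
      using line_div[OF fr gh] by auto
    have "dv P h" if "P \<in> ?Y'" for P
    proof (rule dv_cancel[OF fs_linform hom_fs[OF h(1)]])
      show "ev (linform (lam 0)) P \<noteq> 0" using Yk_off[OF k that] l0 by (simp add: ev_linform)
      show "dv P (pmul (linform (lam 0)) h)" using g that h(2) by (auto simp: J_def)
    qed
    hence "h \<in> II ?Y' (d - 1 - 1)" using h(1) by (auto simp: II_def)
    thus "g \<in> pmul (linform (lam 0)) ` II ?Y' (d - 1 - 1)" using h(2) by blast
  qed
  have b1: "vs.dim J \<le> vs.dim (J \<inter> {x. ?phi x = 0}) + vs.dim (?phi ` J)"
    by (rule rank_nullity_le[OF lin_rho J_fd J_subsp])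
  have b2: "vs.dim (J \<inter> {x. ?phi x = 0}) \<le> vs.dim (II ?Y' (d - 1 - 1))"
    using dim_mono2[OF ker fdim_pmul_image[OF II_sub]] dim_pmul_image[OF II_sub, of "linform (lam 0)" "Yk k" "d - 1 - 1"]
    by linarith
  have b3: "vs.dim (?phi ` J) \<le> Suc ((d - 1) - n k)"
  proof (rule rho_span_bound)
    fix g assume g: "g \<in> J"
    have gh: "g \<in> hom_forms (d - 1)" using g J_sub by blast
    have "\<exists>q. rest g (E 1) (E 2) = (\<Prod>x\<in>ls.xP ` X k. [:-x,1:]^1) * q \<and> degree q \<le> (d - 1) - card (X k)"
      by (rule ls.line_simple[OF gh]) (use g in \<open>auto simp: J_def\<close>)
    thus "J \<subseteq> hom_forms (d - 1) \<and> (\<exists>q. rest g (E 1) (E 2) = (\<Prod>x\<in>ls.xP ` X k. [:-x,1:]^1) * q \<and> degree q \<le> d - 1 - n k)"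
      using J_sub lc_card[OF k] by simp
  qed
  have c: "LB k (d - 1 - 1)"
  proof (rule IH)
    show "k = 0 \<or> 2 * n (k - 1) \<le> Suc (d - 1 - 1)"
    proof (cases k)
      case (Suc k') thus ?thesis using lc_mono[of k' k] k d_def nk2 by simp
    qed simp
  qed
  have dR: "vs.dim (hom_forms d :: (expo \<Rightarrow> 'a) set) = vs.dim (hom_forms (d - 1 - 1) :: (expo \<Rightarrow> 'a) set) + (2 * d + 1)"
  proof -
    obtain e where e: "d = Suc (Suc e)" using d3 by (metis Suc_le_D numeral_3_eq_3 le_SucE Suc_leD)
    show ?thesis unfolding e using dimR_Suc[of e, where 'a='a] dimR_Suc[of "Suc e", where 'a='a] by simp
  qed
  have cY: "card ?Y = card ?Y' + n k" by (rule Yk_card[OF k])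
  have e: "Suc ((d - 1) - n k) + 3 * n k = 2 * d + 1" using nk2 unfolding d_def by arith
  have c': "vs.dim (II ?Y' (d - 1 - 1)) + 3 * card ?Y' \<le> vs.dim (hom_forms (d - 1 - 1) :: (expo \<Rightarrow> 'a) set)"
    using c unfolding LB_def .
  have "vs.dim (II ?Y d) + 3 * card ?Y \<le> vs.dim (hom_forms d :: (expo \<Rightarrow> 'a) set)"
    using a b1 b2 b3 c' dR cY e by linarith
  thus ?thesis unfolding LB_def d_def .
qed

lemma LB_all: "k \<le> r \<Longrightarrow> k = 0 \<or> 2 * n (k - 1) \<le> Suc t \<Longrightarrow> LB k t"
proof (induction k arbitrary: t)
  case 0
  thus ?case by (simp add: LB_def Yk_def II_empty)
next
  case (Suc k)
  have k: "k < r" using Suc by simp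
  have base: "LB (Suc k) (2 * n k - 1)"
    by (rule LB_step[OF k]) (use Suc in auto)
  have "2 * n k - 1 \<le> t" using Suc by simp
  thus ?case
  proof (induction t rule: dec_induct)
    case base show ?case by (rule \<open>LB (Suc k) (2 * n k - 1)\<close>)
  next
    case (step t) thus ?case using LB_mono[of "Suc k" t] Suc.prems by simp
  qed
qed

end


context
  fixes r :: nat and n :: "nat \<Rightarrow> nat" and L :: "nat \<Rightarrow> 'a::field_char_0 \<times> 'a \<times> 'a"
    and X :: "nat \<Rightarrow> ('a \<times> 'a \<times> 'a) set"
  assumes lc: "linear_configuration r n L X"
begin

lemma main_reg: "reg_fin (\<Union>i<r. X i) = 2 * n (r - 1)"
proof -
  define XX where "XX = (\<Union>i<r. X i)"
  have XXY: "XX = Yk X r" by (simp add: XX_def Yk_def[OF lc])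
  define N where "N = n (r - 1)"
  have r1: "r - 1 < r" using lc_r[OF lc] by simp
  have N1: "1 \<le> N" using lc_nge[OF lc r1] N_def by simp
  have finXX: "finite XX" using Yk_fin[OF lc, of r] XXY by simp
  have nzXX: "\<And>P. P \<in> XX \<Longrightarrow> nonzero3 P" using Yk_nz[OF lc, of r] XXY by simp
  have Xr_sub: "X (r - 1) \<subseteq> XX" using r1 by (auto simp: XX_def)
  have hilb: "hilb_fin XX t = int (vs.dim (hom_forms t :: (expo \<Rightarrow> 'a) set)) - int (vs.dim (II XX t))" for t
    unfolding hilb_fin_def II_def by (simp only: fin_ideal_eq[OF nzXX])
  have EQ: "vs.dim (II XX t) + 3 * card XX = vs.dim (hom_forms t :: (expo \<Rightarrow> 'a) set)" if "2 * N \<le> Suc t" for t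
  proof -
    have "LB X r t" by (rule LB_all[OF lc]) (use that N_def in auto)
    hence "vs.dim (II XX t) + 3 * card XX \<le> vs.dim (hom_forms t :: (expo \<Rightarrow> 'a) set)"
      unfolding LB_def[OF lc] XXY .
    moreover have "vs.dim (hom_forms t :: (expo \<Rightarrow> 'a) set) \<le> vs.dim (II XX t) + 3 * card XX"
      by (rule U_bound[OF finXX nzXX])
    ultimately show ?thesis by linarith
  qed
  have zero: "dhilb_fin XX (2 * N) = 0"
  proof -
    have a: "hilb_fin XX (2 * N) = 3 * int (card XX)" using EQ[of "2 * N"] unfolding hilb by linarith
    have b: "hilb_fin XX (2 * N - 1) = 3 * int (card XX)" using EQ[of "2 * N - 1"] N1 unfolding hilb by linarith
    show ?thesis unfolding dhilb_fin_def using a b N1 by simp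
  qed
  have nonzero: "dhilb_fin XX t \<noteq> 0" if t: "t < 2 * N" for t
  proof (cases t)
    case 0
    obtain P where P: "P \<in> X (r - 1)" using lc_card[OF lc r1] N1 N_def
      by (metis card.empty ex_in_conv not_one_le_zero)
    have PX: "P \<in> XX" using P Xr_sub by blast
    have "vs.dim (II XX 0) = 0" by (rule II_low[OF PX nzXX[OF PX]]) simp
    moreover have "vs.dim (hom_forms 0 :: (expo \<Rightarrow> 'a) set) = 1" using dimR[of 0, where 'a='a] by simp
    ultimately show ?thesis unfolding dhilb_fin_def hilb 0 by simp
  next
    case (Suc t')
    obtain lam E where ls: "line_setup lam E (X (r - 1))" and l0: "lam 0 = L (r - 1)" and fr: "frame lam E"
      using line_of[OF lc r1] by blast
    interpret ls: line_setup lam E "X (r - 1)" by (rule ls)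
    have sub: "II XX (Suc t') \<subseteq> pmul (linform (lam 0)) ` hom_forms t'"
    proof
      fix f assume f: "f \<in> II XX (Suc t')"
      have fh: "f \<in> hom_forms (Suc t')" and fdv: "\<And>P. P \<in> X (r - 1) \<Longrightarrow> dv P f"
        using f Xr_sub by (auto simp: II_def)
      have "Suc t' < 2 * card (X (r - 1))" using t Suc lc_card[OF lc r1] N_def by simp
      then obtain g where g: "g \<in> hom_forms (Suc t' - 1)" "f = pmul (linform (lam 0)) g"
        using ls.line_vanish[OF fh fdv] by blast
      thus "f \<in> pmul (linform (lam 0)) ` hom_forms t'" by simp
    qed
    have a: "vs.dim (II XX (Suc t')) \<le> vs.dim (II XX t') + (t' + 1)"
      by (rule M_bound_strong[OF finXX nzXX sub])
    have b: "vs.dim (hom_forms (Suc t') :: (expo \<Rightarrow> 'a) set) = vs.dim (hom_forms t' :: (expo \<Rightarrow> 'a) set) + (t' + 2)"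
      by (rule dimR_Suc)
    have "dhilb_fin XX t = hilb_fin XX (Suc t') - hilb_fin XX t'" unfolding dhilb_fin_def Suc by simp
    also have "\<dots> \<ge> 1" unfolding hilb using a b by linarith
    finally show ?thesis by simp
  qed
  have "reg_fin XX = 2 * N"
    unfolding reg_fin_def
  proof (rule Least_equality)
    show "dhilb_fin XX (2 * N) = 0" by (rule zero)
    show "2 * N \<le> y" if "dhilb_fin XX y = 0" for y
      using nonzero that by (meson not_le)
  qed
  thus ?thesis by (simp add: XX_def N_def)
qed

end

theorem mainTheorem8:
  fixes r :: nat and n :: "nat \<Rightarrow> nat"
    and L :: "nat \<Rightarrow> 'a::field_char_0 \<times> 'a \<times> 'a"
    and X :: "nat \<Rightarrow> ('a \<times> 'a \<times> 'a) set"
  assumes "linear_configuration r n L X"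
  shows "reg_fin (\<Union>i<r. X i) = 2 * n (r - 1)"
  by (rule main_reg[OF assms])


end
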